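(* Let $p>1$, $k\ge2$, $\sigma_i=\frac{i(k-i)}2$, and $\|\cdot\|$ the $\ell^2$ norm on $\mathbb{R}^k$. (i) Let $\boldsymbol\xi(\tau)=(\xi_1,\dots,\xi_k)(\tau)$ be a solution of the system $\dot\xi_i=b_i-b_{i+1}$ ($i=1,\dots,k$), with $b_1=b_{k+1}=0$ and $b_i=\sigma_{i-1}(e^{-(\xi_i-\xi_{i-1})}-1)$ for $i=2,\dots,k$, such that $\sum_{i=1}^k\xi_i(0)=0$ and $|\xi_i(0)|\le C_0$ for all $i$, for some $C_0>0$. Then the solution is defined for all $\tau\ge0$ and there exists $C_1=C_1(C_0)>0$ such that $\sup_i|\xi_i(\tau)|\le C_1e^{-\tau}$ for all $\tau\ge0$. (ii) Let $(\zeta_i(s))_{i=1,\dots,k}$ be a solution, with initial data given at $s=1$, of the system $$\frac1{c_1}\dot\zeta_i=e^{-\frac2{p-1}(\zeta_i-\zeta_{i-1})}-e^{-\frac2{p-1}(\zeta_{i+1}-\zeta_i)},\quad i=1,\dots,k,$$ with the convention that the term $e^{-\frac2{p-1}(\zeta_1-\zeta_0)}$ and the term $e^{-\frac2{p-1}(\zeta_{k+1}-\zeta_k)}$ are absent (i.e. $\zeta_0\equiv-\infty$, $\zeta_{k+1}\equiv+\infty$). Then the solution is defined for all $s\ge1$ and there is $C>0$ such that for all $s\ge1$, $\sup_i|\zeta_i(s)-(\bar\zeta_i(s)+\zeta_0)|\le Cs^{-1}$, where $\zeta_0=\frac1k\sum_{i=1}^k\zeta_i(1)$.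
   Context: $c_1=c_1(p)>0$ is a fixed positive constant depending only on $p$. $\bar\zeta_i(s)=\left(i-\frac{k+1}2\right)\frac{p-1}2\log s+\bar\alpha_i$, $i=1,\dots,k$, where the $\bar\alpha_i$ are uniquely determined by $\sum_{i=1}^k\bar\alpha_i=0$ and $e^{-\frac2{p-1}(\bar\alpha_i-\bar\alpha_{i-1})}=\frac{p-1}{4c_1}(i-1)(k+1-i)$ for $i=2,\dots,k$; $(\bar\zeta_i)$ is then an explicit solution of the system in (ii) with zero center of mass. *)

theory Defs
  imports "HOL-Analysis.Analysis"
begin

text \<open>Points of R^k are represented as functions nat => real, only the
indices 1..k being relevant.\<close>

definition sigma :: "nat \<Rightarrow> nat \<Rightarrow> real" where
  "sigma k i = real i * (real k - real i) / 2"

definition bcoef :: "nat \<Rightarrow> (nat \<Rightarrow> real) \<Rightarrow> nat \<Rightarrow> real" where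
  "bcoef k x i = (if 2 \<le> i \<and> i \<le> k
      then sigma k (i - 1) * (exp (- (x i - x (i - 1))) - 1) else 0)"

definition rhs1 :: "nat \<Rightarrow> (nat \<Rightarrow> real) \<Rightarrow> nat \<Rightarrow> real" where
  "rhs1 k x i = bcoef k x i - bcoef k x (Suc i)"

definition solves1 :: "nat \<Rightarrow> (real \<Rightarrow> nat \<Rightarrow> real) \<Rightarrow> real set \<Rightarrow> bool" where
  "solves1 k xi I \<longleftrightarrow> (\<forall>t\<in>I. \<forall>i\<in>{1..k}.
      ((\<lambda>t. xi t i) has_real_derivative rhs1 k (xi t) i) (at t within I))"

definition Eterm :: "real \<Rightarrow> nat \<Rightarrow> (nat \<Rightarrow> real) \<Rightarrow> nat \<Rightarrow> real" where
  "Eterm p k z i = (if 2 \<le> i \<and> i \<le> k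
      then exp (- (2 / (p - 1)) * (z i - z (i - 1))) else 0)"

definition rhs2 :: "real \<Rightarrow> real \<Rightarrow> nat \<Rightarrow> (nat \<Rightarrow> real) \<Rightarrow> nat \<Rightarrow> real" where
  "rhs2 p c1 k z i = c1 * (Eterm p k z i - Eterm p k z (Suc i))"

definition solves2 :: "real \<Rightarrow> real \<Rightarrow> nat \<Rightarrow> (real \<Rightarrow> nat \<Rightarrow> real) \<Rightarrow> real set \<Rightarrow> bool" where
  "solves2 p c1 k zeta I \<longleftrightarrow> (\<forall>s\<in>I. \<forall>i\<in>{1..k}.
      ((\<lambda>s. zeta s i) has_real_derivative rhs2 p c1 k (zeta s) i) (at s within I))"

text \<open>The constants alpha_bar_i (i = 1..k), uniquely determined; set to 0 outside 1..k.\<close>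
definition alpha_bar :: "real \<Rightarrow> real \<Rightarrow> nat \<Rightarrow> nat \<Rightarrow> real" where
  "alpha_bar p c1 k = (THE a. (\<forall>i. i \<notin> {1..k} \<longrightarrow> a i = 0)
      \<and> (\<Sum>i=1..k. a i) = 0
      \<and> (\<forall>i\<in>{2..k}. exp (- (2 / (p - 1)) * (a i - a (i - 1)))
            = (p - 1) / (4 * c1) * (real i - 1) * (real k + 1 - real i)))"

definition zeta_bar :: "real \<Rightarrow> real \<Rightarrow> nat \<Rightarrow> nat \<Rightarrow> real \<Rightarrow> real" where
  "zeta_bar p c1 k i s = (real i - (real k + 1) / 2) * ((p - 1) / 2) * ln s + alpha_bar p c1 k i"

end

theory Submission
  imports Defs
begin



lemma rho_deriv: "((\<lambda>u::real. (max u 0)^2) has_real_derivative 2 * max u 0) (at u)"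
proof (cases "u = 0")
  case True
  have "((\<lambda>y::real. (max y 0)^2 / y) \<longlongrightarrow> 0) (at 0)"
  proof (rule tendsto_sandwich[where f="\<lambda>y. - \<bar>y\<bar>" and h="\<lambda>y. \<bar>y\<bar>"])
    show "\<forall>\<^sub>F y in at 0. - \<bar>y\<bar> \<le> (max y 0)^2 / (y::real)"
      by (intro always_eventually allI) (auto simp: max_def power2_eq_square divide_simps)
    show "\<forall>\<^sub>F y in at 0. (max y 0)^2 / y \<le> \<bar>y::real\<bar>"
      by (intro always_eventually allI) (auto simp: max_def power2_eq_square divide_simps)
    show "((\<lambda>y. - \<bar>y\<bar>) \<longlongrightarrow> 0) (at (0::real))"
      by (auto intro!: tendsto_eq_intros)
    show "((\<lambda>y. \<bar>y\<bar>) \<longlongrightarrow> 0) (at (0::real))"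
      by (auto intro!: tendsto_eq_intros)
  qed
  then show ?thesis using True by (simp add: DERIV_def)
next
  case False
  show ?thesis
  proof (cases "u > 0")
    case True
    have ev: "\<forall>\<^sub>F y in nhds u. (max y 0)^2 = y^2"
      using eventually_nhds_in_open[of "{0<..}" u] True
      by (auto elim!: eventually_mono)
    have "((\<lambda>y. y^2) has_real_derivative 2 * u) (at u)"
      by (auto intro!: derivative_eq_intros)
    then show ?thesis using True
      by (subst DERIV_cong_ev[OF refl ev refl]) auto
  next
    case F2: False
    have ev: "\<forall>\<^sub>F y in nhds u. (max y 0)^2 = 0"
      using eventually_nhds_in_open[of "{..<0}" u] F2 False
      by (auto elim!: eventually_mono)
    have "((\<lambda>y. 0) has_real_derivative 0) (at u)"
      by (auto intro!: derivative_eq_intros)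
    then show ?thesis using F2 False
      by (subst DERIV_cong_ev[OF refl ev refl]) auto
  qed
qed

lemma decr:
  fixes f f' :: "real \<Rightarrow> real"
  assumes "a \<le> b"
    and der: "\<And>x. x \<in> {a..b} \<Longrightarrow> (f has_real_derivative f' x) (at x within {a..b})"
    and neg: "\<And>x. x \<in> {a..b} \<Longrightarrow> f' x \<le> 0"
  shows "f b \<le> f a"
proof (cases "a = b")
  case True then show ?thesis by simp
next
  case False
  then have ab: "a < b" using assms(1) by simp
  have "\<exists>x\<in>{a<..<b}. f b - f a = (*) (f' x) (b - a)"
    using mvt_simple[OF ab, of f "\<lambda>x h. f' x * h"] der by (auto simp: has_field_derivative_def)
  then obtain x where x: "x \<in> {a<..<b}" "f b - f a = (b - a) * f' x" by auto
  have "f' x \<le> 0" using neg x(1) by auto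
  then have "(b - a) * f' x \<le> 0" using ab by (simp add: mult_nonneg_nonpos)
  then show ?thesis using x(2) by simp
qed




lemma sum_sq_card:
  fixes m :: "nat \<Rightarrow> real"
  shows "(\<Sum>i\<in>A. m i)^2 \<le> real (card A) * (\<Sum>i\<in>A. (m i)^2)"
  using Cauchy_Schwarz_ineq_sum[of "m" "\<lambda>_. 1" A] by (simp add: mult.commute)

lemma pp_gronwall:
  fixes d d' :: "nat \<Rightarrow> real \<Rightarrow> real" and L :: "real \<Rightarrow> real" and A :: "nat set"
  assumes A: "finite A"
  and der: "\<And>i t. i\<in>A \<Longrightarrow> t\<in>{0..<T} \<Longrightarrow> (d i has_real_derivative d' i t) (at t within {0..<T})"
  and init: "\<And>i. i\<in>A \<Longrightarrow> d i 0 \<le> 0"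
  and bnd: "\<And>i t. i\<in>A \<Longrightarrow> t\<in>{0..<T} \<Longrightarrow> d i t > 0 \<Longrightarrow> d' i t \<le> L t * (\<Sum>j\<in>A. max (d j t) 0)"
  and L: "continuous_on {0..<T} L"
  and i: "i \<in> A" and t0: "t0 \<in> {0..<T}"
  shows "d i t0 \<le> 0"
proof -
  have sub: "{0..t0} \<subseteq> {0..<T}" using t0 by auto
  have "compact (L ` {0..t0})"
    by (rule compact_continuous_image) (use continuous_on_subset[OF L sub] in auto)
  then obtain B0 where B0: "\<And>x. x \<in> L ` {0..t0} \<Longrightarrow> norm x \<le> B0"
    using compact_imp_bounded bounded_iff by metis
  define B where "B = max B0 0"
  have B: "\<And>t. t \<in> {0..t0} \<Longrightarrow> L t \<le> B" "B \<ge> 0"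
    using B0 unfolding B_def by (force simp: abs_le_iff)+
  define c where "c = 2 * B * real (card A)"
  define P where "P t = (\<Sum>i\<in>A. (max (d i t) 0)^2)" for t
  define P' where "P' t = (\<Sum>i\<in>A. 2 * max (d i t) 0 * d' i t)" for t
  have Pder: "(P has_real_derivative P' t) (at t within {0..t0})" if "t \<in> {0..t0}" for t
    unfolding P_def P'_def
    apply (rule DERIV_sum)
    apply (rule DERIV_chain2[OF rho_deriv])
    using der[of _ t] that sub DERIV_subset by blast
  have Pbound: "P' t \<le> c * P t" if "t \<in> {0..t0}" for t
  proof -
    define S where "S = (\<Sum>j\<in>A. max (d j t) 0)"
    have S0: "S \<ge> 0" unfolding S_def by (auto intro: sum_nonneg)
    have "2 * max (d i t) 0 * d' i t \<le> 2 * max (d i t) 0 * (B * S)" if "i \<in> A" for i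
    proof (cases "d i t > 0")
      case True
      have "d' i t \<le> L t * S" using bnd[OF that _ True] that sub \<open>t \<in> {0..t0}\<close> unfolding S_def by auto
      also have "\<dots> \<le> B * S" using B(1)[OF \<open>t \<in> {0..t0}\<close>] S0 by (simp add: mult_right_mono)
      finally show ?thesis using True by simp
    next
      case False then show ?thesis by simp
    qed
    then have "P' t \<le> (\<Sum>i\<in>A. 2 * max (d i t) 0 * (B * S))"
      unfolding P'_def by (rule sum_mono)
    also have "\<dots> = 2 * B * S^2"
      by (simp add: S_def sum_distrib_right[symmetric] power2_eq_square algebra_simps sum_distrib_left)
    also have "\<dots> \<le> 2 * B * (real (card A) * P t)"
      using sum_sq_card[of "\<lambda>j. max (d j t) 0" A] B(2) unfolding S_def P_def
      by (intro mult_left_mono) auto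
    finally show ?thesis unfolding c_def by (simp add: algebra_simps)
  qed
  define Q where "Q t = P t * exp (- c * t)" for t
  have "Q t0 \<le> Q 0"
  proof (rule decr[of 0 t0 Q "\<lambda>t. (P' t - c * P t) * exp (- c * t)"])
    show "0 \<le> t0" using t0 by auto
    fix x assume x: "x \<in> {0..t0}"
    show "(Q has_real_derivative (P' x - c * P x) * exp (- c * x)) (at x within {0..t0})"
      unfolding Q_def
      by (rule derivative_eq_intros Pder[OF x] | simp add: algebra_simps)+
    show "(P' x - c * P x) * exp (- c * x) \<le> 0"
      using Pbound[OF x] by (simp add: mult_nonpos_nonneg)
  qed
  moreover have "P 0 = 0" unfolding P_def using init by (auto intro!: sum.neutral)
  ultimately have "P t0 \<le> 0" unfolding Q_def by (simp add: mult_le_0_iff)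
  moreover have "(max (d i t0) 0)^2 \<le> P t0"
    unfolding P_def using A i by (intro member_le_sum) auto
  ultimately have "(max (d i t0) 0)^2 \<le> 0" by linarith
  then have "max (d i t0) 0 = 0" by (simp add: power2_eq_square mult_le_0_iff max_def split: if_splits)
  then show ?thesis by (simp add: max_def split: if_splits)
qed




definition bg :: "nat \<Rightarrow> (real \<Rightarrow> real) \<Rightarrow> (nat \<Rightarrow> real) \<Rightarrow> nat \<Rightarrow> real" where
  "bg k g x i = (if 2 \<le> i \<and> i \<le> k then sigma k (i - 1) * (g (x i - x (i - 1)) - 1) else 0)"

definition rg :: "nat \<Rightarrow> (real \<Rightarrow> real) \<Rightarrow> (nat \<Rightarrow> real) \<Rightarrow> nat \<Rightarrow> real" where
  "rg k g x i = bg k g x i - bg k g x (Suc i)"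

definition solvesg :: "nat \<Rightarrow> (real \<Rightarrow> real) \<Rightarrow> (real \<Rightarrow> nat \<Rightarrow> real) \<Rightarrow> real set \<Rightarrow> bool" where
  "solvesg k g xi I \<longleftrightarrow> (\<forall>t\<in>I. \<forall>i\<in>{1..k}.
      ((\<lambda>t. xi t i) has_real_derivative rg k g (xi t) i) (at t within I))"

lemma rhs1_rg: "rhs1 k = rg k (\<lambda>y. exp (- y))"
  by (intro ext) (simp add: rhs1_def rg_def bg_def bcoef_def)

lemma solves1_solvesg: "solves1 k xi I \<longleftrightarrow> solvesg k (\<lambda>y. exp (- y)) xi I"
  by (simp add: solves1_def solvesg_def rhs1_rg)

lemma sigma_nonneg: "i \<le> k \<Longrightarrow> sigma k i \<ge> 0"
  by (simp add: sigma_def)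

lemma sigma_le: "i \<le> k \<Longrightarrow> sigma k i \<le> real k ^ 2"
proof -
  assume "i \<le> k"
  then have "real i \<le> real k" "real k - real i \<le> real k" "0 \<le> real k - real i" by auto
  then have "real i * (real k - real i) \<le> real k * real k"
    by (intro mult_mono) auto
  moreover have "real k * real k \<ge> 0" by simp
  ultimately have "real i * (real k - real i) / 2 \<le> real k * real k" by linarith
  then show ?thesis by (simp add: sigma_def power2_eq_square)
qed

lemma sigma_0 [simp]: "sigma k 0 = 0" and sigma_k [simp]: "sigma k k = 0"
  by (simp_all add: sigma_def)

lemma sigma_diff2: "2 \<le> i \<Longrightarrow> sigma k (i - 2) - 2 * sigma k (i - 1) + sigma k i = -1"
proof -
  assume "2 \<le> i"
  then obtain j where j: "i = j + 2" by (metis add.commute le_add_diff_inverse)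
  show ?thesis unfolding j sigma_def by (simp add: field_simps)
qed

lemma bg_alt: "1 \<le> i \<Longrightarrow> i \<le> Suc k \<Longrightarrow> bg k g x i = sigma k (i - 1) * (g (x i - x (i - 1)) - 1)"
  by (auto simp: bg_def le_Suc_eq)

definition gprops :: "(real \<Rightarrow> real) \<Rightarrow> bool" where
  "gprops g \<longleftrightarrow> (\<forall>a b. a \<le> b \<longrightarrow> g b \<le> g a) \<and> (\<forall>a b. a \<le> b \<longrightarrow> g a - g b \<le> g a * (b - a))
     \<and> (\<forall>a. g a > 0) \<and> continuous_on UNIV g"

lemma nb_upper:
  assumes gp: "gprops g" and j: "1 \<le> j" "j \<le> Suc k"
  shows "sigma k (j - 1) * (g Yv - g (x j - x (j - 1)))
     \<le> real k ^ 2 * g Yv * (\<Sum>l\<in>{2..k}. max (x l - x (l - 1) - Yv) 0)"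
proof -
  define S where "S = (\<Sum>l\<in>{2..k}. max (x l - x (l - 1) - Yv) 0)"
  have S0: "S \<ge> 0" unfolding S_def by (auto intro: sum_nonneg)
  have G0: "g Yv > 0" using gp by (simp add: gprops_def)
  show ?thesis
  proof (cases "j \<in> {2..k}")
    case False
    then have "j = 1 \<or> j = Suc k" using j by auto
    then have "sigma k (j - 1) = 0" by auto
    then show ?thesis using S0 G0 unfolding S_def[symmetric] by simp
  next
    case True
    have m: "max (x j - x (j - 1) - Yv) 0 \<le> S"
      unfolding S_def using True by (intro member_le_sum) auto
    have h: "0 \<le> sigma k (j - 1)" "sigma k (j - 1) \<le> real k ^ 2"
      using True by (auto intro: sigma_nonneg sigma_le)
    have d: "g Yv - g (x j - x (j - 1)) \<le> g Yv * max (x j - x (j - 1) - Yv) 0"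
    proof (cases "Yv \<le> x j - x (j - 1)")
      case True
      then show ?thesis using gp by (auto simp: gprops_def max_def)
    next
      case False
      then have "g Yv \<le> g (x j - x (j - 1))" using gp by (auto simp: gprops_def)
      then show ?thesis using G0 False by (auto simp: max_def)
    qed
    also have "\<dots> \<le> g Yv * S" using m G0 by simp
    finally have d2: "g Yv - g (x j - x (j - 1)) \<le> g Yv * S" .
    have "sigma k (j - 1) * (g Yv - g (x j - x (j - 1))) \<le> sigma k (j - 1) * (g Yv * S)"
      by (rule mult_left_mono[OF d2 h(1)])
    also have "\<dots> \<le> real k ^ 2 * (g Yv * S)"
      using h G0 S0 by (intro mult_right_mono) auto
    finally show ?thesis unfolding S_def by (simp add: mult.assoc)
  qed
qed

lemma nb_lower:
  assumes gp: "gprops g" and j: "1 \<le> j" "j \<le> Suc k"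
  shows "sigma k (j - 1) * (g (x j - x (j - 1)) - g Zv)
     \<le> real k ^ 2 * (\<Sum>l\<in>{2..k}. g (x l - x (l - 1))) * (\<Sum>l\<in>{2..k}. max (Zv - (x l - x (l - 1))) 0)"
proof -
  define S where "S = (\<Sum>l\<in>{2..k}. max (Zv - (x l - x (l - 1))) 0)"
  define GS where "GS = (\<Sum>l\<in>{2..k}. g (x l - x (l - 1)))"
  have S0: "S \<ge> 0" unfolding S_def by (auto intro: sum_nonneg)
  have gpos: "\<And>a. g a > 0" using gp by (simp add: gprops_def)
  have GS0: "GS \<ge> 0" unfolding GS_def using gpos by (auto intro: sum_nonneg less_imp_le)
  show ?thesis
  proof (cases "j \<in> {2..k}")
    case False
    then have "j = 1 \<or> j = Suc k" using j by auto
    then have "sigma k (j - 1) = 0" by auto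
    then show ?thesis using S0 GS0 unfolding S_def[symmetric] GS_def[symmetric] by simp
  next
    case True
    have m: "max (Zv - (x j - x (j - 1))) 0 \<le> S"
      unfolding S_def using True by (intro member_le_sum) auto
    have gj: "g (x j - x (j - 1)) \<le> GS"
      unfolding GS_def using True gpos by (intro member_le_sum) (auto intro: less_imp_le)
    have h: "0 \<le> sigma k (j - 1)" "sigma k (j - 1) \<le> real k ^ 2"
      using True by (auto intro: sigma_nonneg sigma_le)
    have d: "g (x j - x (j - 1)) - g Zv \<le> g (x j - x (j - 1)) * max (Zv - (x j - x (j - 1))) 0"
    proof (cases "x j - x (j - 1) \<le> Zv")
      case True
      then show ?thesis using gp by (auto simp: gprops_def max_def)
    next
      case False
      then have "g (x j - x (j - 1)) \<le> g Zv" using gp by (auto simp: gprops_def)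
      then show ?thesis using gpos[of "x j - x (j - 1)"] False by (auto simp: max_def)
    qed
    also have "\<dots> \<le> GS * S" using m gj gpos[of "x j - x (j - 1)"] S0
      by (intro mult_mono) auto
    finally have d2: "g (x j - x (j - 1)) - g Zv \<le> GS * S" .
    have "sigma k (j - 1) * (g (x j - x (j - 1)) - g Zv) \<le> sigma k (j - 1) * (GS * S)"
      by (rule mult_left_mono[OF d2 h(1)])
    also have "\<dots> \<le> real k ^ 2 * (GS * S)"
      using h GS0 S0 by (intro mult_right_mono) auto
    finally show ?thesis unfolding S_def GS_def by (simp add: mult.assoc)
  qed
qed

lemma dy_expand:
  assumes i: "i \<in> {2..k}"
  shows "rg k g x i - rg k g x (i - 1) - (G - 1) =
     2 * sigma k (i - 1) * (g (x i - x (i - 1)) - G)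
     + sigma k i * (G - g (x (Suc i) - x i))
     + sigma k (i - 2) * (G - g (x (i - 1) - x (i - 2)))"
proof -
  have e1: "bg k g x i = sigma k (i - 1) * (g (x i - x (i - 1)) - 1)"
    using i by (intro bg_alt) auto
  have e2: "bg k g x (Suc i) = sigma k i * (g (x (Suc i) - x i) - 1)"
    using bg_alt[of "Suc i" k g x] i by auto
  have e3: "bg k g x (i - 1) = sigma k (i - 2) * (g (x (i - 1) - x (i - 2)) - 1)"
    using bg_alt[of "i - 1" k g x] i by (auto simp: numeral_2_eq_2)
  have s: "Suc (i - 1) = i" using i by auto
  have d2: "sigma k (i - 2) - 2 * sigma k (i - 1) + sigma k i = -1"
    using i by (intro sigma_diff2) auto
  have "rg k g x i - rg k g x (i - 1) = 2 * bg k g x i - bg k g x (Suc i) - bg k g x (i - 1)"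
    unfolding rg_def s by simp
  moreover have C: "sigma k i = -1 - sigma k (i - 2) + 2 * sigma k (i - 1)" using d2 by linarith
  ultimately show ?thesis unfolding e1 e2 e3 C
    by (simp add: algebra_simps)
qed




lemma deriv_cont:
  assumes "\<And>t. t \<in> I \<Longrightarrow> (f has_real_derivative f' t) (at t within I)"
  shows "continuous_on I f"
  using assms DERIV_continuous continuous_on_eq_continuous_within by blast

lemma cont_sol:
  assumes "solvesg k g xi I" "j \<in> {1..k}"
  shows "continuous_on I (\<lambda>t. xi t j)"
  using assms unfolding solvesg_def by (intro deriv_cont) blast

lemma dy_deriv:
  assumes "solvesg k g xi I" "i \<in> {2..k}" "t \<in> I"
  shows "((\<lambda>t. xi t i - xi t (i - 1)) has_real_derivative rg k g (xi t) i - rg k g (xi t) (i - 1)) (at t within I)"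
proof -
  have "i \<in> {1..k}" "i - 1 \<in> {1..k}" using assms(2) by auto
  then show ?thesis using assms(1,3) unfolding solvesg_def
    by (intro DERIV_diff) auto
qed

lemma upper_comp:
  assumes gp: "gprops g" and sol: "solvesg k g xi {0..<T}"
    and Yd: "\<And>t. t \<in> {0..<T} \<Longrightarrow> (Y has_real_derivative g (Y t) - 1) (at t within {0..<T})"
    and Y0: "\<And>i. i \<in> {2..k} \<Longrightarrow> xi 0 i - xi 0 (i - 1) \<le> Y 0"
    and i: "i \<in> {2..k}" and t: "t \<in> {0..<T}"
  shows "xi t i - xi t (i - 1) \<le> Y t"
proof -
  have gmono: "\<And>a b. a \<le> b \<Longrightarrow> g b \<le> g a" using gp by (simp add: gprops_def)
  have gcont: "continuous_on UNIV g" using gp by (simp add: gprops_def)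
  have Ycont: "continuous_on {0..<T} Y" using Yd by (rule deriv_cont)
  have "(\<lambda>t. xi t i - xi t (i - 1) - Y t) t \<le> 0"
  proof (rule pp_gronwall[where A = "{2..k}" and T = T and
        d = "\<lambda>j t. xi t j - xi t (j - 1) - Y t" and
        d' = "\<lambda>j t. (rg k g (xi t) j - rg k g (xi t) (j - 1)) - (g (Y t) - 1)" and
        L = "\<lambda>t. 2 * real k ^ 2 * g (Y t)"])
    show "finite {2..k}" by simp
    show "i \<in> {2..k}" "t \<in> {0..<T}" using i t by auto
    show "((\<lambda>t. xi t j - xi t (j - 1) - Y t) has_real_derivative
        rg k g (xi t) j - rg k g (xi t) (j - 1) - (g (Y t) - 1)) (at t within {0..<T})"
      if "j \<in> {2..k}" "t \<in> {0..<T}" for j t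
      using dy_deriv[OF sol that] Yd[OF that(2)] by (rule DERIV_diff)
    show "xi 0 j - xi 0 (j - 1) - Y 0 \<le> 0" if "j \<in> {2..k}" for j using Y0[OF that] by simp
    show "continuous_on {0..<T} (\<lambda>t. 2 * real k ^ 2 * g (Y t))"
      by (intro continuous_intros continuous_on_compose2[OF gcont Ycont]) auto
    fix j t assume j: "j \<in> {2..k}" and t: "t \<in> {0..<T}"
      and pos: "0 < xi t j - xi t (j - 1) - Y t"
    define x where "x = xi t"
    define G where "G = g (Y t)"
    have e: "rg k g x j - rg k g x (j - 1) - (G - 1) =
     2 * sigma k (j - 1) * (g (x j - x (j - 1)) - G)
     + sigma k j * (G - g (x (Suc j) - x j))
     + sigma k (j - 2) * (G - g (x (j - 1) - x (j - 2)))"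
      by (rule dy_expand[OF j])
    have t1: "2 * sigma k (j - 1) * (g (x j - x (j - 1)) - G) \<le> 0"
    proof -
      have "g (x j - x (j - 1)) \<le> G" unfolding G_def using pos x_def by (intro gmono) simp
      moreover have "sigma k (j - 1) \<ge> 0" using j by (intro sigma_nonneg) auto
      ultimately show ?thesis by (simp add: mult_nonneg_nonpos)
    qed
    have t2: "sigma k j * (G - g (x (Suc j) - x j)) \<le> real k ^ 2 * G * (\<Sum>l\<in>{2..k}. max (x l - x (l - 1) - Y t) 0)"
      using nb_upper[OF gp, of "Suc j" k "Y t" x] j unfolding G_def by auto
    have t3: "sigma k (j - 2) * (G - g (x (j - 1) - x (j - 2))) \<le> real k ^ 2 * G * (\<Sum>l\<in>{2..k}. max (x l - x (l - 1) - Y t) 0)"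
    proof -
      have jj: "j - 1 - 1 = j - 2" "1 \<le> j - 1" "j - 1 \<le> Suc k" using j by auto
      show ?thesis using nb_upper[OF gp jj(2,3), of "Y t" x] unfolding jj(1) G_def .
    qed
    show "rg k g (xi t) j - rg k g (xi t) (j - 1) - (g (Y t) - 1)
        \<le> 2 * real k ^ 2 * g (Y t) * (\<Sum>l\<in>{2..k}. max (xi t l - xi t (l - 1) - Y t) 0)"
      using e t1 t2 t3 unfolding x_def G_def by linarith
  qed
  then show ?thesis by simp
qed

lemma lower_comp:
  assumes gp: "gprops g" and sol: "solvesg k g xi {0..<T}"
    and Zd: "\<And>t. t \<in> {0..<T} \<Longrightarrow> (Z has_real_derivative g (Z t) - 1) (at t within {0..<T})"
    and Z0: "\<And>i. i \<in> {2..k} \<Longrightarrow> Z 0 \<le> xi 0 i - xi 0 (i - 1)"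
    and i: "i \<in> {2..k}" and t: "t \<in> {0..<T}"
  shows "Z t \<le> xi t i - xi t (i - 1)"
proof -
  have gmono: "\<And>a b. a \<le> b \<Longrightarrow> g b \<le> g a" using gp by (simp add: gprops_def)
  have gcont: "continuous_on UNIV g" using gp by (simp add: gprops_def)
  have "(\<lambda>t. Z t - (xi t i - xi t (i - 1))) t \<le> 0"
  proof (rule pp_gronwall[where A = "{2..k}" and T = T and
        d = "\<lambda>j t. Z t - (xi t j - xi t (j - 1))" and
        d' = "\<lambda>j t. (g (Z t) - 1) - (rg k g (xi t) j - rg k g (xi t) (j - 1))" and
        L = "\<lambda>t. 2 * real k ^ 2 * (\<Sum>l\<in>{2..k}. g (xi t l - xi t (l - 1)))"])
    show "finite {2..k}" by simp
    show "i \<in> {2..k}" "t \<in> {0..<T}" using i t by auto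
    show "((\<lambda>t. Z t - (xi t j - xi t (j - 1))) has_real_derivative
        (g (Z t) - 1) - (rg k g (xi t) j - rg k g (xi t) (j - 1))) (at t within {0..<T})"
      if "j \<in> {2..k}" "t \<in> {0..<T}" for j t
      using DERIV_diff[OF Zd[OF that(2)] dy_deriv[OF sol that]] by simp
    show "Z 0 - (xi 0 j - xi 0 (j - 1)) \<le> 0" if "j \<in> {2..k}" for j using Z0[OF that] by simp
    have "continuous_on {0..<T} (\<lambda>t. g (xi t l - xi t (l - 1)))" if "l \<in> {2..k}" for l
    proof (rule continuous_on_compose2[OF gcont])
      have "l \<in> {1..k}" "l - 1 \<in> {1..k}" using that by auto
      then show "continuous_on {0..<T} (\<lambda>t. xi t l - xi t (l - 1))"
        using cont_sol[OF sol] by (intro continuous_on_diff) auto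
    qed auto
    then show "continuous_on {0..<T} (\<lambda>t. 2 * real k ^ 2 * (\<Sum>l\<in>{2..k}. g (xi t l - xi t (l - 1))))"
      by (intro continuous_intros) auto
    fix j t assume j: "j \<in> {2..k}" and t: "t \<in> {0..<T}"
      and pos: "0 < Z t - (xi t j - xi t (j - 1))"
    define x where "x = xi t"
    define G where "G = g (Z t)"
    have e: "rg k g x j - rg k g x (j - 1) - (G - 1) =
     2 * sigma k (j - 1) * (g (x j - x (j - 1)) - G)
     + sigma k j * (G - g (x (Suc j) - x j))
     + sigma k (j - 2) * (G - g (x (j - 1) - x (j - 2)))"
      by (rule dy_expand[OF j])
    have t1: "2 * sigma k (j - 1) * (G - g (x j - x (j - 1))) \<le> 0"
    proof -
      have "G \<le> g (x j - x (j - 1))" unfolding G_def using pos x_def by (intro gmono) simp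
      moreover have "sigma k (j - 1) \<ge> 0" using j by (intro sigma_nonneg) auto
      ultimately show ?thesis by (simp add: mult_nonneg_nonpos)
    qed
    define R where "R = real k ^ 2 * (\<Sum>l\<in>{2..k}. g (x l - x (l - 1))) * (\<Sum>l\<in>{2..k}. max (Z t - (x l - x (l - 1))) 0)"
    have t2: "sigma k j * (g (x (Suc j) - x j) - G) \<le> R"
      using nb_lower[OF gp, of "Suc j" k x "Z t"] j unfolding G_def R_def by auto
    have t3: "sigma k (j - 2) * (g (x (j - 1) - x (j - 2)) - G) \<le> R"
    proof -
      have jj: "j - 1 - 1 = j - 2" "1 \<le> j - 1" "j - 1 \<le> Suc k" using j by auto
      show ?thesis using nb_lower[OF gp jj(2,3), of x "Z t"] unfolding jj(1) G_def R_def .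
    qed
    have "g (Z t) - 1 - (rg k g (xi t) j - rg k g (xi t) (j - 1)) \<le> 2 * R"
      using e t1 t2 t3 unfolding x_def G_def by (simp add: algebra_simps)
    then show "g (Z t) - 1 - (rg k g (xi t) j - rg k g (xi t) (j - 1))
        \<le> 2 * real k ^ 2 * (\<Sum>l\<in>{2..k}. g (xi t l - xi t (l - 1))) * (\<Sum>l\<in>{2..k}. max (Z t - (xi t l - xi t (l - 1))) 0)"
      unfolding R_def x_def by (simp add: mult.assoc)
  qed
  then show ?thesis by simp
qed




lemma gprops_exp: "gprops (\<lambda>y. exp (- y))"
proof -
  have "exp (- a) - exp (- b) \<le> exp (- a) * (b - a)" if "a \<le> b" for a b :: real
  proof -
    have "1 + (a - b) \<le> exp (a - b)" by (rule exp_ge_add_one_self)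
    then have "exp (- a) * (1 + (a - b)) \<le> exp (- a) * exp (a - b)" by simp
    also have "exp (- a) * exp (a - b) = exp (- b)" by (simp add: exp_add[symmetric])
    finally show ?thesis by (simp add: algebra_simps)
  qed
  then show ?thesis unfolding gprops_def by (auto intro!: continuous_intros)
qed

lemma gprops_gM: "gprops (\<lambda>y. exp (- max y (- M)))"
proof -
  have "exp (- max a (- M)) - exp (- max b (- M)) \<le> exp (- max a (- M)) * (b - a)" if "a \<le> b" for a b :: real
  proof -
    define A where "A = max a (- M)"
    define B where "B = max b (- M)"
    have AB: "A \<le> B" "B - A \<le> b - a" using that unfolding A_def B_def by (auto simp: max_def)
    have "1 + (A - B) \<le> exp (A - B)" by (rule exp_ge_add_one_self)
    then have "exp (- A) * (1 + (A - B)) \<le> exp (- A) * exp (A - B)" by simp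
    also have "exp (- A) * exp (A - B) = exp (- B)" by (simp add: exp_add[symmetric])
    finally have "exp (- A) - exp (- B) \<le> exp (- A) * (B - A)" by (simp add: algebra_simps)
    also have "\<dots> \<le> exp (- A) * (b - a)" using AB by simp
    finally show ?thesis unfolding A_def B_def .
  qed
  moreover have "a \<le> b \<Longrightarrow> exp (- max b (- M)) \<le> exp (- max a (- M))" for a b :: real
    by (simp add: max_def)
  ultimately show ?thesis unfolding gprops_def by (auto intro!: continuous_intros)
qed

definition bar :: "real \<Rightarrow> real \<Rightarrow> real" where
  "bar a t = ln (1 + a * exp (- t))"

lemma bar_q_pos: "(a::real) > -1 \<Longrightarrow> (t::real) \<ge> 0 \<Longrightarrow> 1 + a * exp (- t) > 0"
proof -
  assume a: "a > -1" and t: "t \<ge> 0"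
  show ?thesis
  proof (cases "a \<ge> 0")
    case True
    have "a * exp (- t) \<ge> 0" using True by (intro mult_nonneg_nonneg) auto
    then show ?thesis by linarith
  next
    case False
    have "exp (- t) \<le> 1" using t by simp
    then have "a * exp (- t) \<ge> a" using False by (simp add: mult_le_cancel_left1)
    then show ?thesis using a by linarith
  qed
qed

lemma bar_deriv:
  assumes a: "a > -1" and t: "t \<ge> 0"
  shows "(bar a has_real_derivative exp (- bar a t) - 1) (at t within S)"
proof -
  have q: "1 + a * exp (- t) > 0" using bar_q_pos[OF a t] .
  have "(bar a has_real_derivative (a * (exp (- t) * (- 1))) / (1 + a * exp (- t))) (at t within S)"
    unfolding bar_def using q by (auto intro!: derivative_eq_intros)
  moreover have "exp (- bar a t) - 1 = (a * (exp (- t) * (- 1))) / (1 + a * exp (- t))"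
    unfolding bar_def using q by (simp add: exp_minus exp_ln field_simps)
  ultimately show ?thesis by simp
qed

lemma bar_0: "a > -1 \<Longrightarrow> bar a 0 = ln (1 + a)"
  by (simp add: bar_def)

lemma bar_up_bounds:
  assumes "a \<ge> 0" "t \<ge> 0"
  shows "0 \<le> bar a t" "bar a t \<le> a * exp (- t)"
  using assms unfolding bar_def by (auto intro!: ln_add_one_self_le_self)

lemma bar_low_bounds:
  assumes a: "-1 < a" "a \<le> 0" and t: "t \<ge> 0"
  shows "bar a t \<le> 0" "ln (1 + a) \<le> bar a t" "- bar a t \<le> (- a) / (1 + a) * exp (- t)"
proof -
  have q: "1 + a * exp (- t) > 0" using bar_q_pos[OF a(1) t] .
  have e1: "exp (- t) \<le> 1" using t by simp
  have "a * exp (- t) \<le> 0" using a by (simp add: mult_nonpos_nonneg)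
  then show "bar a t \<le> 0" unfolding bar_def using q by simp
  have "a \<le> a * exp (- t)" using a e1 by (simp add: mult_le_cancel_left1)
  then show "ln (1 + a) \<le> bar a t" unfolding bar_def using a by (subst ln_le_cancel_iff) auto
  define u where "u = - a * exp (- t)"
  have u: "0 \<le> u" "u \<le> - a" unfolding u_def using a e1 by (auto simp: mult_le_cancel_left1 mult_nonpos_nonneg)
  have "- bar a t = ln (1 / (1 - u))" unfolding bar_def u_def using q by (simp add: ln_div)
  also have "\<dots> \<le> 1 / (1 - u) - 1" using u a by (intro ln_le_minus_one) auto
  also have "\<dots> = u / (1 - u)" using u a by (simp add: field_simps)
  also have "\<dots> \<le> u / (1 + a)" using u a by (intro divide_left_mono) auto
  also have "\<dots> = (- a) / (1 + a) * exp (- t)" unfolding u_def by simp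
  finally show "- bar a t \<le> (- a) / (1 + a) * exp (- t)" .
qed




lemma sum_rg: "(\<Sum>i=1..k. rg k g x i) = 0"
proof -
  have "(\<Sum>i=1..k. rg k g x i) = - (\<Sum>i=1..k. bg k g x (Suc i) - bg k g x i)"
    unfolding rg_def by (simp add: sum_negf[symmetric])
  also have "\<dots> = - (bg k g x (Suc k) - bg k g x 1)"
    by (subst sum_Suc_diff) auto
  also have "\<dots> = 0" by (simp add: bg_def)
  finally show ?thesis .
qed

lemma sum_const:
  assumes sol: "solvesg k g xi {0..<T}" and t: "t \<in> {0..<T}"
  shows "(\<Sum>i=1..k. xi t i) = (\<Sum>i=1..k. xi 0 i)"
proof -
  have "\<exists>c. \<forall>x\<in>{0..<T}. (\<lambda>t. \<Sum>i=1..k. xi t i) x = c"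
  proof (rule has_field_derivative_zero_constant)
    show "convex {0..<T::real}" by simp
    fix x assume x: "x \<in> {0..<T}"
    have "((\<lambda>t. \<Sum>i=1..k. xi t i) has_real_derivative (\<Sum>i=1..k. rg k g (xi x) i)) (at x within {0..<T})"
      using sol x unfolding solvesg_def by (intro DERIV_sum) auto
    moreover have "(\<Sum>i=1..k. rg k g (xi x) i) = 0" by (rule sum_rg)
    ultimately show "((\<lambda>t. \<Sum>i=1..k. xi t i) has_real_derivative 0) (at x within {0..<T})"
      by simp
  qed
  then obtain c where c: "\<And>x. x \<in> {0..<T} \<Longrightarrow> (\<Sum>i=1..k. xi x i) = c" by auto
  have "0 \<in> {0..<T}" using t by auto
  then show ?thesis using c t by metis
qed

lemma tele_bound:
  fixes x :: "nat \<Rightarrow> real"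
  assumes "\<And>i. i \<in> {2..k} \<Longrightarrow> \<bar>x i - x (i - 1)\<bar> \<le> e"
  shows "i \<in> {1..k} \<Longrightarrow> \<bar>x i - x 1\<bar> \<le> real (i - 1) * e"
proof (induction i)
  case 0 then show ?case by simp
next
  case (Suc n)
  show ?case
  proof (cases "n = 0")
    case True then show ?thesis by simp
  next
    case False
    then have n: "n \<in> {1..k}" "Suc n \<in> {2..k}" using Suc.prems by auto
    have "\<bar>x (Suc n) - x 1\<bar> \<le> \<bar>x (Suc n) - x n\<bar> + \<bar>x n - x 1\<bar>" by linarith
    also have "\<dots> \<le> e + real (n - 1) * e" using assms[OF n(2)] Suc.IH[OF n(1)] by simp
    also have "\<dots> = real (Suc n - 1) * e" using False by (simp add: algebra_simps of_nat_diff)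
    finally show ?thesis .
  qed
qed

lemma sum0_bound:
  fixes x :: "nat \<Rightarrow> real"
  assumes k: "1 \<le> k" and e: "0 \<le> e"
    and d: "\<And>i. i \<in> {2..k} \<Longrightarrow> \<bar>x i - x (i - 1)\<bar> \<le> e"
    and s: "(\<Sum>i=1..k. x i) = 0" and i: "i \<in> {1..k}"
  shows "\<bar>x i\<bar> \<le> 2 * real k * e"
proof -
  have tb: "\<And>j. j \<in> {1..k} \<Longrightarrow> \<bar>x j - x 1\<bar> \<le> real k * e"
  proof -
    fix j assume j: "j \<in> {1..k}"
    have "\<bar>x j - x 1\<bar> \<le> real (j - 1) * e" by (rule tele_bound[of k x e j]) (use d j in auto)
    also have "\<dots> \<le> real k * e" using j e by (intro mult_right_mono) auto
    finally show "\<bar>x j - x 1\<bar> \<le> real k * e" .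
  qed
  have "(\<Sum>j=1..k. x 1 - x j) = real k * x 1"
    using s by (simp add: sum_subtractf)
  then have "\<bar>real k * x 1\<bar> \<le> (\<Sum>j=1..k. \<bar>x 1 - x j\<bar>)"
    by (metis sum_abs)
  also have "\<dots> \<le> (\<Sum>j=1..k. real k * e)"
    using tb by (intro sum_mono) (simp add: abs_minus_commute)
  also have "\<dots> = real k * (real k * e)" by simp
  finally have "real k * \<bar>x 1\<bar> \<le> real k * (real k * e)" by (simp add: abs_mult)
  then have x1: "\<bar>x 1\<bar> \<le> real k * e" using k by simp
  have "\<bar>x i\<bar> \<le> \<bar>x i - x 1\<bar> + \<bar>x 1\<bar>" by linarith
  also have "\<dots> \<le> real k * e + real k * e" using tb[OF i] x1 by linarith
  finally show ?thesis by (simp add: algebra_simps)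
qed

lemma decay_gen:
  assumes k: "2 \<le> k" and C0: "0 \<le> C0" and gp: "gprops g"
    and geq: "\<And>y. y \<ge> - 2 * C0 \<Longrightarrow> g y = exp (- y)"
    and sol: "solvesg k g xi {0..<T}" and s0: "(\<Sum>i=1..k. xi 0 i) = 0"
    and b0: "\<And>i. i \<in> {1..k} \<Longrightarrow> \<bar>xi 0 i\<bar> \<le> C0"
    and t: "t \<in> {0..<T}"
  shows "\<And>i. i \<in> {2..k} \<Longrightarrow> - 2 * C0 \<le> xi t i - xi t (i - 1)"
    and "\<And>i. i \<in> {2..k} \<Longrightarrow> \<bar>xi t i - xi t (i - 1)\<bar> \<le> (exp (2 * C0) - 1) * exp (- t)"
    and "\<And>i. i \<in> {1..k} \<Longrightarrow> \<bar>xi t i\<bar> \<le> 2 * real k * ((exp (2 * C0) - 1) * exp (- t))"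
proof -
  define aY where "aY = exp (2 * C0) - 1"
  define aZ where "aZ = exp (- 2 * C0) - 1"
  have aY: "aY \<ge> 0" "aY > -1" unfolding aY_def using C0 by auto
  have aZ: "aZ \<le> 0" "aZ > -1" unfolding aZ_def using C0 by auto
  have Y0: "bar aY 0 = 2 * C0" using bar_0[OF aY(2)] unfolding aY_def by simp
  have Z0: "bar aZ 0 = - 2 * C0" using bar_0[OF aZ(2)] unfolding aZ_def by simp
  have y0: "- 2 * C0 \<le> xi 0 i - xi 0 (i - 1) \<and> xi 0 i - xi 0 (i - 1) \<le> 2 * C0" if "i \<in> {2..k}" for i
  proof -
    have "i - 1 \<in> {1..k}" "i \<in> {1..k}" using that by auto
    then show ?thesis using b0[of i] b0[of "i - 1"] by (auto simp: abs_le_iff)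
  qed
  have Yd: "(bar aY has_real_derivative g (bar aY s) - 1) (at s within {0..<T})" if "s \<in> {0..<T}" for s
  proof -
    have "g (bar aY s) = exp (- bar aY s)" using bar_up_bounds(1)[OF aY(1), of s] that C0 by (intro geq) auto
    then show ?thesis using bar_deriv[OF aY(2), of s] that by simp
  qed
  have Zd: "(bar aZ has_real_derivative g (bar aZ s) - 1) (at s within {0..<T})" if "s \<in> {0..<T}" for s
  proof -
    have "ln (1 + aZ) \<le> bar aZ s" using bar_low_bounds(2)[OF aZ(2,1), of s] that by auto
    then have "g (bar aZ s) = exp (- bar aZ s)" using aZ unfolding aZ_def by (intro geq) simp
    then show ?thesis using bar_deriv[OF aZ(2), of s] that by simp
  qed
  have up: "xi t i - xi t (i - 1) \<le> bar aY t" if "i \<in> {2..k}" for i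
    by (rule upper_comp[OF gp sol Yd _ that t]) (use y0 Y0 in auto)
  have lo: "bar aZ t \<le> xi t i - xi t (i - 1)" if "i \<in> {2..k}" for i
    by (rule lower_comp[OF gp sol Zd _ that t]) (use y0 Z0 in auto)
  have t0: "t \<ge> 0" using t by auto
  have Zlow: "- 2 * C0 \<le> bar aZ t" using bar_low_bounds(2)[OF aZ(2,1) t0] aZ unfolding aZ_def by simp
  have Zb: "- bar aZ t \<le> (exp (2 * C0) - 1) * exp (- t)"
  proof -
    have "(- aZ) / (1 + aZ) = exp (2 * C0) - 1" unfolding aZ_def
      by (simp add: field_simps exp_minus)
    then show ?thesis using bar_low_bounds(3)[OF aZ(2,1) t0] by simp
  qed
  have Yb: "bar aY t \<le> (exp (2 * C0) - 1) * exp (- t)"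
    using bar_up_bounds(2)[OF aY(1) t0] unfolding aY_def .
  have Yp: "0 \<le> bar aY t" using bar_up_bounds(1)[OF aY(1) t0] .
  have Zn: "bar aZ t \<le> 0" using bar_low_bounds(1)[OF aZ(2,1) t0] .
  show "- 2 * C0 \<le> xi t i - xi t (i - 1)" if "i \<in> {2..k}" for i using lo[OF that] Zlow by simp
  show dif: "\<bar>xi t i - xi t (i - 1)\<bar> \<le> (exp (2 * C0) - 1) * exp (- t)" if "i \<in> {2..k}" for i
    using lo[OF that] up[OF that] Zb Yb Yp Zn by (simp add: abs_le_iff)
  show "\<bar>xi t i\<bar> \<le> 2 * real k * ((exp (2 * C0) - 1) * exp (- t))" if "i \<in> {1..k}" for i
  proof (rule sum0_bound[of k _ "xi t", OF _ _ dif _ that])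
    show "1 \<le> k" using k by simp
    show "0 \<le> (exp (2 * C0) - 1) * exp (- t)" using C0 by simp
    show "(\<Sum>i=1..k. xi t i) = 0" using sum_const[OF sol t] s0 by simp
  qed
qed




lemma cont_on_ge0:
  fixes g :: "real \<Rightarrow> 'b::topological_space"
  assumes "\<And>b. b \<ge> 0 \<Longrightarrow> continuous_on {0..b} g"
  shows "continuous_on {0..} g"
  unfolding continuous_on_eq_continuous_within
proof
  fix u :: real assume u: "u \<in> {0..}"
  have "continuous (at u within {0..u+1}) g"
    using assms[of "u+1"] u by (auto simp: continuous_on_eq_continuous_within)
  moreover have "at u within {0..u+1} = at u within {0..}"
    by (rule at_within_nhd[where S = "{..<u+1}"]) auto
  ultimately show "continuous (at u within {0..}) g" by simp
qed

lemma exp_int: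
  fixes lam c d u :: real
  assumes lam: "lam > 0" and u: "u \<ge> 0"
  shows "integral {0..u} (\<lambda>s. c + d * exp (lam * s)) = c * u + d * (exp (lam * u) - 1) / lam"
proof -
  have "((\<lambda>s. c + d * exp (lam * s)) has_integral
      ((c * u + d * exp (lam * u) / lam) - (c * 0 + d * exp (lam * 0) / lam))) {0..u}"
    apply (rule fundamental_theorem_of_calculus[OF u])
    unfolding has_real_derivative_iff_has_vector_derivative[symmetric]
    using lam by (auto intro!: derivative_eq_intros)
  then show ?thesis by (simp add: integral_unique diff_divide_distrib algebra_simps)
qed

lemma global_exist:
  fixes F :: "'b::banach \<Rightarrow> 'b" and x0 :: 'b
  assumes lip: "\<And>u v. norm (F u - F v) \<le> L * norm (u - v)" and L: "0 \<le> L"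
  shows "\<exists>\<phi>. \<phi> 0 = x0 \<and> (\<forall>t\<ge>0. (\<phi> has_vector_derivative F (\<phi> t)) (at t within {0..}))"
proof -
  define lam where "lam = 2 * L + 1"
  have lam: "lam > 0" "L / lam \<le> 1/2" unfolding lam_def using L by (auto simp: field_simps)
  have Fcont: "continuous_on UNIV F"
  proof (rule lipschitz_on_continuous_on)
    show "lipschitz_on L UNIV F" unfolding lipschitz_on_def using lip L by (simp add: dist_norm)
  qed
  define f where "f \<psi> s = F (exp (lam * s) *\<^sub>R apply_bcontfun \<psi> s)" for \<psi> :: "real \<Rightarrow>\<^sub>C 'b" and s
  have fcont: "continuous_on UNIV (f \<psi>)" for \<psi>
    unfolding f_def
    by (intro continuous_on_compose2[OF Fcont] continuous_intros) auto
  have fint: "f \<psi> integrable_on {0..u}" for \<psi> u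
    by (rule integrable_continuous_real) (use fcont continuous_on_subset in blast)
  have fbound: "norm (f \<psi> s) \<le> norm (F 0) + L * norm \<psi> * exp (lam * s)" for \<psi> s
  proof -
    have "norm (f \<psi> s) \<le> norm (F 0) + norm (f \<psi> s - F 0)" using norm_triangle_ineq[of "F 0" "f \<psi> s - F 0"] by simp
    also have "norm (f \<psi> s - F 0) \<le> L * norm (exp (lam * s) *\<^sub>R apply_bcontfun \<psi> s - 0)"
      unfolding f_def by (rule lip)
    also have "\<dots> = L * (exp (lam * s) * norm (apply_bcontfun \<psi> s))" by simp
    also have "\<dots> \<le> L * (exp (lam * s) * norm \<psi>)"
      using L by (intro mult_left_mono norm_bounded) auto
    finally show ?thesis by (simp add: algebra_simps)
  qed
  define Phi where "Phi \<psi> t = exp (- lam * max t 0) *\<^sub>R (x0 + integral {0..max t 0} (f \<psi>))" for \<psi> t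
  have eu: "exp (- lam * u) * u \<le> 1 / lam" "exp (- lam * u) * ((exp (lam * u) - 1) / lam) \<le> 1 / lam"
    "exp (- lam * u) \<le> 1" if "u \<ge> 0" for u
  proof -
    have "1 + lam * u \<le> exp (lam * u)" by (rule exp_ge_add_one_self)
    then have "lam * u \<le> exp (lam * u)" by linarith
    then have "lam * u * exp (- lam * u) \<le> 1"
      by (simp add: exp_minus field_simps)
    then show "exp (- lam * u) * u \<le> 1 / lam" using lam by (simp add: field_simps)
    show "exp (- lam * u) * ((exp (lam * u) - 1) / lam) \<le> 1 / lam"
      using lam by (simp add: exp_minus field_simps)
    show "exp (- lam * u) \<le> 1" using that lam by simp
  qed
  have Phi_bc: "Phi \<psi> \<in> bcontfun" for \<psi>
  proof (rule bcontfun_normI)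
    have "continuous_on {0..} (\<lambda>u. integral {0..u} (f \<psi>))"
      by (rule cont_on_ge0) (rule indefinite_integral_continuous_1[OF fint])
    then have "continuous_on UNIV (\<lambda>t. integral {0..max t 0} (f \<psi>))"
      by (rule continuous_on_compose2) (auto intro!: continuous_intros)
    then show "continuous_on UNIV (Phi \<psi>)"
      unfolding Phi_def by (intro continuous_intros) auto
    fix t :: real
    define u where "u = max t 0"
    have u: "u \<ge> 0" unfolding u_def by simp
    have "norm (integral {0..u} (f \<psi>)) \<le> integral {0..u} (\<lambda>s. norm (F 0) + L * norm \<psi> * exp (lam * s))"
      by (rule integral_norm_bound_integral[OF fint]) (auto intro!: integrable_continuous_real continuous_intros fbound)
    also have "\<dots> = norm (F 0) * u + L * norm \<psi> * ((exp (lam * u) - 1) / lam)"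
      using exp_int[OF lam(1) u] by simp
    finally have I: "norm (integral {0..u} (f \<psi>)) \<le> norm (F 0) * u + L * norm \<psi> * ((exp (lam * u) - 1) / lam)" .
    have "norm (Phi \<psi> t) = exp (- lam * u) * norm (x0 + integral {0..u} (f \<psi>))"
      unfolding Phi_def u_def by simp
    also have "\<dots> \<le> exp (- lam * u) * (norm x0 + (norm (F 0) * u + L * norm \<psi> * ((exp (lam * u) - 1) / lam)))"
      using I norm_triangle_ineq[of x0 "integral {0..u} (f \<psi>)"] by (intro mult_left_mono) auto
    also have "\<dots> = exp (- lam * u) * norm x0 + norm (F 0) * (exp (- lam * u) * u)
        + L * norm \<psi> * (exp (- lam * u) * ((exp (lam * u) - 1) / lam))"
      by (simp add: algebra_simps)
    also have "\<dots> \<le> 1 * norm x0 + norm (F 0) * (1 / lam) + L * norm \<psi> * (1 / lam)"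
      using eu[OF u] L by (intro add_mono mult_left_mono mult_right_mono) auto
    finally show "norm (Phi \<psi> t) \<le> norm x0 + norm (F 0) * (1 / lam) + L * norm \<psi> * (1 / lam)" by simp
  qed
  define Q where "Q \<psi> = Bcontfun (Phi \<psi>)" for \<psi>
  have applyQ: "apply_bcontfun (Q \<psi>) = Phi \<psi>" for \<psi>
    unfolding Q_def using Phi_bc by (simp add: Bcontfun_inverse)
  have contr: "dist (Q \<psi>1) (Q \<psi>2) \<le> (1/2) * dist \<psi>1 \<psi>2" for \<psi>1 \<psi>2
  proof (rule dist_bound)
    fix t :: real
    define u where "u = max t 0"
    have u: "u \<ge> 0" unfolding u_def by simp
    define d where "d = dist \<psi>1 \<psi>2"
    have d: "d \<ge> 0" unfolding d_def by simp
    have pt: "norm (f \<psi>1 s - f \<psi>2 s) \<le> 0 + L * d * exp (lam * s)" for s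
    proof -
      have "norm (f \<psi>1 s - f \<psi>2 s) \<le> L * norm (exp (lam * s) *\<^sub>R apply_bcontfun \<psi>1 s - exp (lam * s) *\<^sub>R apply_bcontfun \<psi>2 s)"
        unfolding f_def by (rule lip)
      also have "\<dots> = L * (exp (lam * s) * dist (apply_bcontfun \<psi>1 s) (apply_bcontfun \<psi>2 s))"
        by (simp add: dist_norm scaleR_diff_right[symmetric])
      also have "\<dots> \<le> L * (exp (lam * s) * d)"
        unfolding d_def using L by (intro mult_left_mono dist_bounded) auto
      finally show ?thesis by (simp add: algebra_simps)
    qed
    have "norm (integral {0..u} (\<lambda>s. f \<psi>1 s - f \<psi>2 s)) \<le> integral {0..u} (\<lambda>s. 0 + L * d * exp (lam * s))"
      by (rule integral_norm_bound_integral) (auto intro!: integrable_continuous_real continuous_intros integrable_diff fint continuous_on_subset[OF fcont] pt[simplified])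
    also have "\<dots> = L * d * ((exp (lam * u) - 1) / lam)"
      using exp_int[OF lam(1) u, of 0 "L * d"] by simp
    finally have I: "norm (integral {0..u} (f \<psi>1) - integral {0..u} (f \<psi>2)) \<le> L * d * ((exp (lam * u) - 1) / lam)"
      by (simp add: integral_diff[OF fint fint])
    have "dist (apply_bcontfun (Q \<psi>1) t) (apply_bcontfun (Q \<psi>2) t)
        = exp (- lam * u) * norm (integral {0..u} (f \<psi>1) - integral {0..u} (f \<psi>2))"
      unfolding applyQ Phi_def u_def[symmetric] dist_norm
      by (simp add: scaleR_diff_right[symmetric])
    also have "\<dots> \<le> exp (- lam * u) * (L * d * ((exp (lam * u) - 1) / lam))"
      using I by (intro mult_left_mono) auto
    also have "\<dots> = L * d * (exp (- lam * u) * ((exp (lam * u) - 1) / lam))" by simp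
    also have "\<dots> \<le> L * d * (1 / lam)"
      using eu(2)[OF u] L d by (intro mult_left_mono) auto
    also have "\<dots> = (L / lam) * d" by simp
    also have "\<dots> \<le> (1/2) * d" using lam(2) d by (intro mult_right_mono) auto
    finally show "dist (apply_bcontfun (Q \<psi>1) t) (apply_bcontfun (Q \<psi>2) t) \<le> 1 / 2 * dist \<psi>1 \<psi>2"
      unfolding d_def .
  qed
  obtain \<psi> where fixQ: "Q \<psi> = \<psi>"
    using banach_fix_type[of "1/2" Q] contr by auto
  have psi: "apply_bcontfun \<psi> t = exp (- lam * t) *\<^sub>R (x0 + integral {0..t} (f \<psi>))" if "t \<ge> 0" for t
    using fun_cong[OF arg_cong[OF fixQ, of apply_bcontfun], of t] that unfolding applyQ Phi_def by simp
  define \<phi> where "\<phi> t = exp (lam * t) *\<^sub>R apply_bcontfun \<psi> t" for t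
  have phi: "\<phi> t = x0 + integral {0..t} (f \<psi>)" if "t \<ge> 0" for t
    unfolding \<phi>_def psi[OF that] by (simp add: exp_minus_inverse[symmetric] exp_add[symmetric])
  have fphi: "f \<psi> s = F (\<phi> s)" for s unfolding f_def \<phi>_def by simp
  show ?thesis
  proof (intro exI conjI allI impI)
    show "\<phi> 0 = x0" using phi[of 0] by simp
    fix t :: real assume t: "t \<ge> 0"
    have "((\<lambda>u. integral {0..u} (f \<psi>)) has_vector_derivative f \<psi> t) (at t within {0..t+1})"
      by (rule integral_has_vector_derivative) (use continuous_on_subset[OF fcont] t in auto)
    moreover have "at t within {0..t+1} = at t within {0..}"
      by (rule at_within_nhd[where S = "{..<t+1}"]) (use t in auto)
    ultimately have "((\<lambda>u. integral {0..u} (f \<psi>)) has_vector_derivative f \<psi> t) (at t within {0..})"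
      by simp
    then have D: "((\<lambda>u. x0 + integral {0..u} (f \<psi>)) has_vector_derivative f \<psi> t) (at t within {0..})"
      by (intro derivative_eq_intros) auto
    have "(\<phi> has_vector_derivative f \<psi> t) (at t within {0..})"
      by (rule has_vector_derivative_transform[OF _ _ D]) (use t phi in auto)
    then show "(\<phi> has_vector_derivative F (\<phi> t)) (at t within {0..})"
      by (simp only: fphi)
  qed
qed




instance bcontfun :: (metric_space, banach) banach ..

definition tent :: "real \<Rightarrow> real" where "tent r = max 0 (1 - 2 * \<bar>r\<bar>)"

lemma tent_int: "tent (real j - real i) = (if i = j then 1 else 0)"
proof (cases "i = j")
  case False
  then have "\<bar>real j - real i\<bar> \<ge> 1" by linarith
  then show ?thesis using False by (simp add: tent_def)
qed (simp add: tent_def)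

lemma tent_bounds: "0 \<le> tent r" "tent r \<le> 1"
  by (auto simp: tent_def)

definition embf :: "nat \<Rightarrow> (nat \<Rightarrow> real) \<Rightarrow> real \<Rightarrow> real" where
  "embf k x s = (\<Sum>i=1..k. x i * tent (s - real i))"

definition emb :: "nat \<Rightarrow> (nat \<Rightarrow> real) \<Rightarrow> (real \<Rightarrow>\<^sub>C real)" where
  "emb k x = Bcontfun (embf k x)"

lemma emb_bc: "embf k x \<in> bcontfun"
proof (rule bcontfun_normI)
  show "continuous_on UNIV (embf k x)" unfolding embf_def tent_def
    by (intro continuous_intros)
  fix s :: real
  have "norm (embf k x s) \<le> (\<Sum>i=1..k. \<bar>x i * tent (s - real i)\<bar>)"
    unfolding embf_def real_norm_def by (rule sum_abs)
  also have "\<dots> \<le> (\<Sum>i=1..k. \<bar>x i\<bar>)"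
    using tent_bounds by (intro sum_mono) (auto simp: abs_mult intro: mult_left_le)
  finally show "norm (embf k x s) \<le> (\<Sum>i=1..k. \<bar>x i\<bar>)" .
qed

lemma apply_emb_gen: "apply_bcontfun (emb k x) s = embf k x s"
  unfolding emb_def using emb_bc by (simp add: Bcontfun_inverse)

lemma apply_emb: "apply_bcontfun (emb k x) (real j) = (if j \<in> {1..k} then x j else 0)"
proof -
  have "embf k x (real j) = (\<Sum>i\<in>{1..k}. if i = j then x i else 0)"
    unfolding embf_def tent_int by (intro sum.cong) auto
  also have "\<dots> = (if j \<in> {1..k} then x j else 0)"
    by (simp add: sum.delta')
  finally show ?thesis by (simp add: apply_emb_gen)
qed

lemma emb_norm: "norm (emb k x) \<le> (\<Sum>i=1..k. \<bar>x i\<bar>)"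
proof (rule norm_bound)
  fix s :: real
  have "norm (embf k x s) \<le> (\<Sum>i=1..k. \<bar>x i * tent (s - real i)\<bar>)"
    unfolding embf_def real_norm_def by (rule sum_abs)
  also have "\<dots> \<le> (\<Sum>i=1..k. \<bar>x i\<bar>)"
    using tent_bounds by (intro sum_mono) (auto simp: abs_mult intro: mult_left_le)
  finally show "norm (apply_bcontfun (emb k x) s) \<le> (\<Sum>i=1..k. \<bar>x i\<bar>)"
    by (simp add: apply_emb_gen)
qed

lemma emb_diff: "emb k x - emb k y = emb k (\<lambda>i. x i - y i)"
  by (rule bcontfun_eqI) (simp add: apply_emb_gen embf_def sum_subtractf left_diff_distrib)

lemma bl_apply: "bounded_linear (\<lambda>u::real \<Rightarrow>\<^sub>C real. apply_bcontfun u s)"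
proof (rule bounded_linear_intro[where K = 1])
  show "apply_bcontfun (x + y) s = apply_bcontfun x s + apply_bcontfun y s" for x y :: "real \<Rightarrow>\<^sub>C real"
    by simp
  show "apply_bcontfun (r *\<^sub>R x) s = r *\<^sub>R apply_bcontfun x s" for r and x :: "real \<Rightarrow>\<^sub>C real"
    by simp
  show "norm (apply_bcontfun x s) \<le> norm x * 1" for x :: "real \<Rightarrow>\<^sub>C real"
    using norm_bounded[of x s] by simp
qed

lemma gM_lip: "\<bar>exp (- max a (- M)) - exp (- max b (- M))\<bar> \<le> exp M * \<bar>a - b\<bar>" for a b M :: real
proof -
  have one: "exp (- max a (- M)) - exp (- max b (- M)) \<le> exp M * (b - a)" if "a \<le> b" for a b
  proof -
    have "exp (- max a (- M)) - exp (- max b (- M)) \<le> exp (- max a (- M)) * (b - a)"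
      using gprops_gM[of M] that unfolding gprops_def by blast
    also have "\<dots> \<le> exp M * (b - a)" using that by (intro mult_right_mono) auto
    finally show ?thesis .
  qed
  have mono: "exp (- max b (- M)) \<le> exp (- max a (- M))" if "a \<le> b" for a b
    using that by (simp add: max_def)
  show ?thesis
  proof (cases "a \<le> b")
    case True
    then have "\<bar>exp (- max a (- M)) - exp (- max b (- M))\<bar> = exp (- max a (- M)) - exp (- max b (- M))"
      using mono[OF True] by simp
    then show ?thesis using one[OF True] True by simp
  next
    case False then have ba: "b \<le> a" by simp
    then have "\<bar>exp (- max a (- M)) - exp (- max b (- M))\<bar> = exp (- max b (- M)) - exp (- max a (- M))"
      using mono[OF ba] by simp
    then show ?thesis using one[OF ba] ba by simp
  qed
qed

definition FF :: "nat \<Rightarrow> (real \<Rightarrow> real) \<Rightarrow> (real \<Rightarrow>\<^sub>C real) \<Rightarrow> (real \<Rightarrow>\<^sub>C real)" where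
  "FF k g u = emb k (rg k g (\<lambda>j. apply_bcontfun u (real j)))"

lemma bg_lip:
  assumes glip: "\<And>a b. \<bar>g a - g b\<bar> \<le> E * \<bar>a - b\<bar>" and E: "0 \<le> E"
    and d: "\<And>j. \<bar>x j - x' j\<bar> \<le> D"
  shows "\<bar>bg k g x j - bg k g x' j\<bar> \<le> real k ^ 2 * (E * (2 * D))"
proof (cases "2 \<le> j \<and> j \<le> k")
  case True
  have s: "0 \<le> sigma k (j - 1)" "sigma k (j - 1) \<le> real k ^ 2" using True
    by (auto intro: sigma_nonneg sigma_le)
  have "\<bar>g (x j - x (j - 1)) - g (x' j - x' (j - 1))\<bar> \<le> E * \<bar>(x j - x (j - 1)) - (x' j - x' (j - 1))\<bar>"
    by (rule glip)
  also have "\<dots> \<le> E * (2 * D)"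
  proof -
    have "\<bar>(x j - x (j - 1)) - (x' j - x' (j - 1))\<bar> \<le> \<bar>x j - x' j\<bar> + \<bar>x (j - 1) - x' (j - 1)\<bar>" by linarith
    also have "\<dots> \<le> 2 * D" using d[of j] d[of "j - 1"] by simp
    finally show ?thesis using E by (intro mult_left_mono) auto
  qed
  finally have g: "\<bar>g (x j - x (j - 1)) - g (x' j - x' (j - 1))\<bar> \<le> E * (2 * D)" .
  have "\<bar>bg k g x j - bg k g x' j\<bar> = sigma k (j - 1) * \<bar>g (x j - x (j - 1)) - g (x' j - x' (j - 1))\<bar>"
    using True s by (simp add: bg_def abs_mult right_diff_distrib[symmetric])
  also have "\<dots> \<le> real k ^ 2 * (E * (2 * D))"
    using g s by (intro mult_mono) auto
  finally show ?thesis .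
next
  case False
  have "0 \<le> \<bar>x 0 - x' 0\<bar>" by simp
  then have "0 \<le> D" using d[of 0] by linarith
  moreover have "bg k g x j = 0" "bg k g x' j = 0" using False unfolding bg_def by auto
  ultimately show ?thesis using E by simp
qed

lemma FF_lip:
  assumes glip: "\<And>a b. \<bar>g a - g b\<bar> \<le> E * \<bar>a - b\<bar>" and E: "0 \<le> E"
  shows "norm (FF k g u - FF k g v) \<le> (real k * (4 * real k ^ 2 * E)) * norm (u - v)"
proof -
  define x where "x = (\<lambda>j. apply_bcontfun u (real j))"
  define x' where "x' = (\<lambda>j. apply_bcontfun v (real j))"
  have d: "\<bar>x j - x' j\<bar> \<le> norm (u - v)" for j
    unfolding x_def x'_def using norm_bounded[of "u - v" "real j"] by simp
  have c: "\<bar>rg k g x i - rg k g x' i\<bar> \<le> 4 * real k ^ 2 * E * norm (u - v)" for i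
  proof -
    have "\<bar>rg k g x i - rg k g x' i\<bar> \<le> \<bar>bg k g x i - bg k g x' i\<bar> + \<bar>bg k g x (Suc i) - bg k g x' (Suc i)\<bar>"
      unfolding rg_def by linarith
    also have "\<dots> \<le> real k ^ 2 * (E * (2 * norm (u - v))) + real k ^ 2 * (E * (2 * norm (u - v)))"
      by (intro add_mono bg_lip[OF glip E d])
    finally show ?thesis by (simp add: algebra_simps)
  qed
  have "norm (FF k g u - FF k g v) = norm (emb k (\<lambda>i. rg k g x i - rg k g x' i))"
    unfolding FF_def emb_diff x_def x'_def ..
  also have "\<dots> \<le> (\<Sum>i=1..k. \<bar>rg k g x i - rg k g x' i\<bar>)" by (rule emb_norm)
  also have "\<dots> \<le> (\<Sum>i=1..k. 4 * real k ^ 2 * E * norm (u - v))" by (intro sum_mono c)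
  also have "\<dots> = (real k * (4 * real k ^ 2 * E)) * norm (u - v)" by simp
  finally show ?thesis .
qed

lemma rg_local:
  assumes "\<And>j. j \<in> {1..k} \<Longrightarrow> x j = x' j"
  shows "rg k g x i = rg k g x' i"
proof -
  have e: "x j = x' j \<and> x (j - 1) = x' (j - 1)" if "2 \<le> j" "j \<le> k" for j
  proof -
    have "j \<in> {1..k}" "j - 1 \<in> {1..k}" using that by auto
    then show ?thesis using assms by blast
  qed
  have "bg k g x j = bg k g x' j" for j
    using e[of j] unfolding bg_def by auto
  then show ?thesis unfolding rg_def by auto
qed

lemma bg_gM:
  assumes "\<And>j. j \<in> {2..k} \<Longrightarrow> x j - x (j - 1) \<ge> - M"
  shows "bg k (\<lambda>y. exp (- max y (- M))) x j = bg k (\<lambda>y. exp (- y)) x j"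
  using assms[of j] unfolding bg_def by (auto simp: max_def)

lemma exists_gen:
  fixes g :: "real \<Rightarrow> real"
  assumes glip: "\<And>a b. \<bar>g a - g b\<bar> \<le> E * \<bar>a - b\<bar>" and E: "0 \<le> E"
  shows "\<exists>xi. solvesg k g xi {0..} \<and> xi 0 = x0"
proof -
  obtain \<phi> where phi0: "\<phi> 0 = emb k x0"
    and phid: "\<And>t. t \<ge> 0 \<Longrightarrow> (\<phi> has_vector_derivative FF k g (\<phi> t)) (at t within {0..})"
    using global_exist[of "FF k g" "real k * (4 * real k ^ 2 * E)" "emb k x0"] FF_lip[OF glip E] E by auto
  define xi where "xi t i = (if i \<in> {1..k} then apply_bcontfun (\<phi> t) (real i) else x0 i)" for t i
  have "solvesg k g xi {0..}"
    unfolding solvesg_def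
  proof (intro ballI)
    fix t :: real and i :: nat assume t: "t \<in> {0..}" and i: "i \<in> {1..k}"
    have "((\<lambda>t. apply_bcontfun (\<phi> t) (real i)) has_vector_derivative apply_bcontfun (FF k g (\<phi> t)) (real i)) (at t within {0..})"
      using bounded_linear.has_vector_derivative[OF bl_apply phid] t by auto
    moreover have "apply_bcontfun (FF k g (\<phi> t)) (real i) = rg k g (xi t) i"
      unfolding FF_def apply_emb using i by (auto simp: xi_def intro!: rg_local)
    moreover have "(\<lambda>t. xi t i) = (\<lambda>t. apply_bcontfun (\<phi> t) (real i))" using i unfolding xi_def by auto
    ultimately show "((\<lambda>t. xi t i) has_real_derivative rg k g (xi t) i) (at t within {0..})"
      by (simp add: has_real_derivative_iff_has_vector_derivative)
  qed
  moreover have "xi 0 = x0" unfolding xi_def phi0 by (auto simp: apply_emb)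
  ultimately show ?thesis by auto
qed




lemma solvesg_subset: "solvesg k g xi I \<Longrightarrow> J \<subseteq> I \<Longrightarrow> solvesg k g xi J"
  unfolding solvesg_def using DERIV_subset by blast

lemma part1:
  assumes k: "2 \<le> k"
  shows "\<forall>C0>0. \<exists>C1>0. \<forall>x0 :: nat \<Rightarrow> real.
        (\<Sum>i=1..k. x0 i) = 0 \<and> (\<forall>i\<in>{1..k}. \<bar>x0 i\<bar> \<le> C0) \<longrightarrow>
          (\<exists>xi. solves1 k xi {0..} \<and> xi 0 = x0) \<and>
          (\<forall>T>0. \<forall>xi. solves1 k xi {0..<T} \<and> xi 0 = x0 \<longrightarrow>
              (\<forall>\<tau>\<in>{0..<T}. \<forall>i\<in>{1..k}. \<bar>xi \<tau> i\<bar> \<le> C1 * exp (- \<tau>)))"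
proof (intro allI impI)
  fix C0 :: real assume C0: "C0 > 0"
  define C1 where "C1 = 2 * real k * (exp (2 * C0) - 1) + 1"
  have K0: "exp (2 * C0) - 1 \<ge> 0" using C0 by simp
  have C1: "C1 > 0" unfolding C1_def using K0 by (simp add: add_nonneg_pos)
  show "\<exists>C1>0. \<forall>x0 :: nat \<Rightarrow> real.
        (\<Sum>i=1..k. x0 i) = 0 \<and> (\<forall>i\<in>{1..k}. \<bar>x0 i\<bar> \<le> C0) \<longrightarrow>
          (\<exists>xi. solves1 k xi {0..} \<and> xi 0 = x0) \<and>
          (\<forall>T>0. \<forall>xi. solves1 k xi {0..<T} \<and> xi 0 = x0 \<longrightarrow>
              (\<forall>\<tau>\<in>{0..<T}. \<forall>i\<in>{1..k}. \<bar>xi \<tau> i\<bar> \<le> C1 * exp (- \<tau>)))"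
  proof (intro exI[of _ C1] conjI allI impI C1)
    fix x0 :: "nat \<Rightarrow> real"
    assume H: "(\<Sum>i=1..k. x0 i) = 0 \<and> (\<forall>i\<in>{1..k}. \<bar>x0 i\<bar> \<le> C0)"
    then have s0: "(\<Sum>i=1..k. x0 i) = 0" and b0: "\<And>i. i \<in> {1..k} \<Longrightarrow> \<bar>x0 i\<bar> \<le> C0" by auto
    define gM where "gM = (\<lambda>y::real. exp (- max y (- (2 * C0))))"
    have gpM: "gprops gM" unfolding gM_def by (rule gprops_gM)
    have geqM: "gM y = exp (- y)" if "y \<ge> - 2 * C0" for y unfolding gM_def using that by (simp add: max_def)
    obtain xi where sol: "solvesg k gM xi {0..}" and xi0: "xi 0 = x0"
      using exists_gen[of gM "exp (2 * C0)" k x0] gM_lip unfolding gM_def by auto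
    have "solves1 k xi {0..}"
      unfolding solves1_solvesg solvesg_def
    proof (intro ballI)
      fix t i assume t: "t \<in> {0::real..}" and i: "i \<in> {1..k}"
      have solT: "solvesg k gM xi {0..<t+1}" by (rule solvesg_subset[OF sol]) auto
      have tT: "t \<in> {0..<t+1}" using t by auto
      have low: "- (2 * C0) \<le> xi t j - xi t (j - 1)" if "j \<in> {2..k}" for j
        using decay_gen(1)[OF k _ gpM geqM solT _ _ tT that] C0 s0 b0 xi0 by auto
      have e: "rg k gM (xi t) i = rg k (\<lambda>y. exp (- y)) (xi t) i"
        unfolding rg_def gM_def using bg_gM[where x="xi t" and M="2 * C0" and k=k] low by auto
      have "((\<lambda>t. xi t i) has_real_derivative rg k gM (xi t) i) (at t within {0..})"
        using sol t i unfolding solvesg_def by blast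
      then show "((\<lambda>t. xi t i) has_real_derivative rg k (\<lambda>y. exp (- y)) (xi t) i) (at t within {0..})"
        unfolding e .
    qed
    then show "\<exists>xi. solves1 k xi {0..} \<and> xi 0 = x0" using xi0 by auto
  next
    fix x0 :: "nat \<Rightarrow> real" and T :: real and xi
    assume H: "(\<Sum>i=1..k. x0 i) = 0 \<and> (\<forall>i\<in>{1..k}. \<bar>x0 i\<bar> \<le> C0)"
      and T: "T > 0" and X: "solves1 k xi {0..<T} \<and> xi 0 = x0"
    show "\<forall>\<tau>\<in>{0..<T}. \<forall>i\<in>{1..k}. \<bar>xi \<tau> i\<bar> \<le> C1 * exp (- \<tau>)"
    proof (intro ballI)
      fix \<tau> i assume tau: "\<tau> \<in> {0..<T}" and i: "i \<in> {1..k}"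
      have "\<bar>xi \<tau> i\<bar> \<le> 2 * real k * ((exp (2 * C0) - 1) * exp (- \<tau>))"
        using decay_gen(3)[OF k _ gprops_exp _ _ _ _ tau i, of C0] C0 H X
        unfolding solves1_solvesg by auto
      also have "\<dots> \<le> C1 * exp (- \<tau>)" unfolding C1_def by (simp add: algebra_simps)
      finally show "\<bar>xi \<tau> i\<bar> \<le> C1 * exp (- \<tau>)" .
    qed
  qed
qed




definition Acoef :: "real \<Rightarrow> real \<Rightarrow> nat \<Rightarrow> nat \<Rightarrow> real" where
  "Acoef p c1 k i = (p - 1) / (4 * c1) * (real i - 1) * (real k + 1 - real i)"

lemma Acoef_pos: "p > 1 \<Longrightarrow> c1 > 0 \<Longrightarrow> i \<in> {2..k} \<Longrightarrow> Acoef p c1 k i > 0"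
  unfolding Acoef_def by (auto intro!: mult_pos_pos divide_pos_pos)

lemma alpha_bar_props:
  assumes p: "p > 1" and c1: "c1 > 0" and k: "k \<ge> 1"
  shows "(\<Sum>i=1..k. alpha_bar p c1 k i) = 0"
    and "\<And>i. i \<in> {2..k} \<Longrightarrow> exp (- (2 / (p - 1)) * (alpha_bar p c1 k i - alpha_bar p c1 k (i - 1)))
            = (p - 1) / (4 * c1) * (real i - 1) * (real k + 1 - real i)"
proof -
  define P where "P a \<longleftrightarrow> (\<forall>i. i \<notin> {1..k} \<longrightarrow> a i = 0)
      \<and> (\<Sum>i=1..k. a i) = 0
      \<and> (\<forall>i\<in>{2..k}. exp (- (2 / (p - 1)) * (a i - a (i - 1)))
            = (p - 1) / (4 * c1) * (real i - 1) * (real k + 1 - real i))" for a :: "nat \<Rightarrow> real"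
  define \<beta> where "\<beta> = 2 / (p - 1)"
  have \<beta>: "\<beta> > 0" unfolding \<beta>_def using p by simp
  define \<delta> where "\<delta> i = - ln (Acoef p c1 k i) / \<beta>" for i
  define a0 where "a0 i = (\<Sum>j\<in>{2..i}. \<delta> j)" for i
  define m where "m = (\<Sum>i=1..k. a0 i) / real k"
  define a where "a i = (if i \<in> {1..k} then a0 i - m else 0)" for i
  have a0_step: "a0 i - a0 (i - 1) = \<delta> i" if "i \<ge> 2" for i
  proof -
    have "{2..i} = insert i {2..i - 1}" using that by auto
    moreover have "i \<notin> {2..i - 1}" by auto
    ultimately show ?thesis unfolding a0_def by simp
  qed
  have Pa: "P a"
    unfolding P_def
  proof (intro conjI allI impI ballI)
    show "a i = 0" if "i \<notin> {1..k}" for i using that unfolding a_def by auto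
    have "(\<Sum>i=1..k. a i) = (\<Sum>i=1..k. a0 i - m)" unfolding a_def by (intro sum.cong) auto
    also have "\<dots> = 0" unfolding m_def using k by (simp add: sum_subtractf)
    finally show "(\<Sum>i=1..k. a i) = 0" .
    fix i assume i: "i \<in> {2..k}"
    have "a i - a (i - 1) = \<delta> i" unfolding a_def using i a0_step[of i] by auto
    then have "exp (- (2 / (p - 1)) * (a i - a (i - 1))) = Acoef p c1 k i"
      unfolding \<delta>_def \<beta>_def[symmetric] using \<beta> Acoef_pos[OF p c1 i] by simp
    then show "exp (- (2 / (p - 1)) * (a i - a (i - 1))) = (p - 1) / (4 * c1) * (real i - 1) * (real k + 1 - real i)"
      unfolding Acoef_def .
  qed
  have uniq: "b = a" if Pb: "P b" for b
  proof -
    have step: "b i - b (i - 1) = a i - a (i - 1)" if i: "i \<in> {2..k}" for i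
    proof -
      have "exp (- \<beta> * (b i - b (i - 1))) = exp (- \<beta> * (a i - a (i - 1)))"
        using Pb Pa i unfolding P_def \<beta>_def by auto
      then have "- \<beta> * (b i - b (i - 1)) = - \<beta> * (a i - a (i - 1))" by simp
      then show ?thesis using \<beta> by simp
    qed
    have const: "b i - a i = b 1 - a 1" if "i \<in> {1..k}" for i
      using that
    proof (induction i)
      case 0 then show ?case by simp
    next
      case (Suc n)
      show ?case
      proof (cases "n = 0")
        case True then show ?thesis by simp
      next
        case False
        then have "n \<in> {1..k}" "Suc n \<in> {2..k}" using Suc.prems by auto
        then show ?thesis using Suc.IH step[of "Suc n"] by simp
      qed
    qed
    have "(\<Sum>i=1..k. b i - a i) = 0" using Pb Pa unfolding P_def by (simp add: sum_subtractf)
    moreover have "(\<Sum>i=1..k. b i - a i) = (\<Sum>i=1..k. b 1 - a 1)"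
      by (rule sum.cong[OF refl const])
    moreover have "(\<Sum>i=1..k. b 1 - a 1) = real k * (b 1 - a 1)" by simp
    ultimately have "b 1 - a 1 = 0" using k by simp
    then have "b i = a i" if "i \<in> {1..k}" for i using const[OF that] by simp
    moreover have "b i = a i" if "i \<notin> {1..k}" for i using Pb Pa that unfolding P_def by auto
    ultimately show ?thesis by blast
  qed
  have "P (alpha_bar p c1 k)"
  proof -
    have ex: "\<exists>!a. P a" using Pa uniq by blast
    have "alpha_bar p c1 k = (THE a. P a)" unfolding alpha_bar_def P_def ..
    then show ?thesis using theI'[OF ex] by simp
  qed
  then show "(\<Sum>i=1..k. alpha_bar p c1 k i) = 0"
    and "\<And>i. i \<in> {2..k} \<Longrightarrow> exp (- (2 / (p - 1)) * (alpha_bar p c1 k i - alpha_bar p c1 k (i - 1)))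
            = (p - 1) / (4 * c1) * (real i - 1) * (real k + 1 - real i)"
    unfolding P_def by auto
qed




lemma sigma_diff1: "1 \<le> i \<Longrightarrow> sigma k (i - 1) - sigma k i = real i - (real k + 1) / 2"
proof -
  assume "1 \<le> i"
  then obtain j where j: "i = j + 1" by (metis add.commute le_add_diff_inverse)
  show ?thesis unfolding j sigma_def by (simp add: field_simps)
qed

lemma Eterm_id:
  assumes p: "p > 1" and c1: "c1 > 0" and s: "s > 0" and j: "j \<in> {1..Suc k}"
    and z: "\<And>l. z l = zeta_bar p c1 k l s + m0 + (p - 1) / 2 * x l"
  shows "c1 * Eterm p k z j = (p - 1) / 2 / s * sigma k (j - 1) * exp (- (x j - x (j - 1)))"
proof (cases "j \<in> {2..k}")
  case False
  then have "j = 1 \<or> j = Suc k" using j by auto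
  then have "sigma k (j - 1) = 0" by auto
  moreover have "Eterm p k z j = 0" using False unfolding Eterm_def by auto
  ultimately show ?thesis by simp
next
  case True
  define \<alpha> where "\<alpha> = alpha_bar p c1 k"
  have k1: "k \<ge> 1" using True by auto
  have A: "exp (- (2 / (p - 1)) * (\<alpha> j - \<alpha> (j - 1))) = (p - 1) / (4 * c1) * (real j - 1) * (real k + 1 - real j)"
    unfolding \<alpha>_def by (rule alpha_bar_props(2)[OF p c1 k1 True])
  have rj: "real (j - 1) = real j - 1" using True by auto
  have d: "z j - z (j - 1) = (p - 1) / 2 * ln s + (\<alpha> j - \<alpha> (j - 1)) + (p - 1) / 2 * (x j - x (j - 1))"
    unfolding z zeta_bar_def \<alpha>_def rj by (simp add: algebra_simps)
  have e: "- (2 / (p - 1)) * (z j - z (j - 1)) = - ln s + (- (2 / (p - 1)) * (\<alpha> j - \<alpha> (j - 1))) + - (x j - x (j - 1))"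
    unfolding d using p by (simp add: field_simps)
  have "Eterm p k z j = exp (- (2 / (p - 1)) * (z j - z (j - 1)))"
    using True unfolding Eterm_def by auto
  also have "\<dots> = exp (- ln s) * exp (- (2 / (p - 1)) * (\<alpha> j - \<alpha> (j - 1))) * exp (- (x j - x (j - 1)))"
    by (simp only: e exp_add)
  also have "\<dots> = (1 / s) * ((p - 1) / (4 * c1) * (real j - 1) * (real k + 1 - real j)) * exp (- (x j - x (j - 1)))"
    unfolding A using s by (simp add: exp_minus inverse_eq_divide)
  finally have E: "Eterm p k z j = (1 / s) * ((p - 1) / (4 * c1) * (real j - 1) * (real k + 1 - real j)) * exp (- (x j - x (j - 1)))" .
  have sg: "sigma k (j - 1) = (real j - 1) * (real k + 1 - real j) / 2" unfolding sigma_def rj by (simp add: algebra_simps)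
  show ?thesis unfolding E sg using c1 s by (simp add: field_simps inverse_eq_divide)
qed

lemma rhs2_id:
  assumes p: "p > 1" and c1: "c1 > 0" and s: "s > 0" and i: "i \<in> {1..k}"
    and z: "\<And>l. z l = zeta_bar p c1 k l s + m0 + (p - 1) / 2 * x l"
  shows "rhs2 p c1 k z i = (p - 1) / 2 / s * (rhs1 k x i + (real i - (real k + 1) / 2))"
proof -
  have e1: "c1 * Eterm p k z i = (p - 1) / 2 / s * sigma k (i - 1) * exp (- (x i - x (i - 1)))"
    by (rule Eterm_id[OF p c1 s _ z]) (use i in auto)
  have e2: "c1 * Eterm p k z (Suc i) = (p - 1) / 2 / s * sigma k i * exp (- (x (Suc i) - x i))"
    using Eterm_id[OF p c1 s _ z, of "Suc i"] i by auto
  have b1: "bg k (\<lambda>y. exp (- y)) x i = sigma k (i - 1) * (exp (- (x i - x (i - 1))) - 1)"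
    using bg_alt[of i k "\<lambda>y. exp (- y)" x] i by auto
  have b2: "bg k (\<lambda>y. exp (- y)) x (Suc i) = sigma k i * (exp (- (x (Suc i) - x i)) - 1)"
    using bg_alt[of "Suc i" k "\<lambda>y. exp (- y)" x] i by auto
  have sd: "sigma k (i - 1) - sigma k i = real i - (real k + 1) / 2" using i by (intro sigma_diff1) auto
  have "rhs2 p c1 k z i = c1 * Eterm p k z i - c1 * Eterm p k z (Suc i)"
    unfolding rhs2_def by (simp add: algebra_simps)
  also have "\<dots> = (p - 1) / 2 / s * (sigma k (i - 1) * exp (- (x i - x (i - 1))) - sigma k i * exp (- (x (Suc i) - x i)))"
    unfolding e1 e2 by (simp add: algebra_simps)
  also have "sigma k (i - 1) * exp (- (x i - x (i - 1))) - sigma k i * exp (- (x (Suc i) - x i))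
      = rhs1 k x i + (real i - (real k + 1) / 2)"
    unfolding rhs1_rg rg_def b1 b2 sd[symmetric] by (simp add: algebra_simps)
  finally show ?thesis .
qed

lemma forward:
  assumes p: "p > 1" and c1: "c1 > 0" and S: "S \<subseteq> {0<..}"
    and sol: "solves1 k xi (ln ` S)"
  shows "solves2 p c1 k (\<lambda>s i. zeta_bar p c1 k i s + m0 + (p - 1) / 2 * xi (ln s) i) S"
  unfolding solves2_def
proof (intro ballI)
  fix s i assume s: "s \<in> S" and i: "i \<in> {1..k}"
  have s0: "s > 0" using s S by auto
  have d1: "((\<lambda>s. xi s i) \<circ> ln has_real_derivative rhs1 k (xi (ln s)) i * (1 / s)) (at s within S)"
  proof (rule DERIV_image_chain)
    show "((\<lambda>s. xi s i) has_real_derivative rhs1 k (xi (ln s)) i) (at (ln s) within ln ` S)"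
      using sol s i unfolding solves1_def by auto
    show "(ln has_real_derivative 1 / s) (at s within S)"
      using s0 by (auto intro!: derivative_eq_intros)
  qed
  have d2: "((\<lambda>s. zeta_bar p c1 k i s + m0 + (p - 1) / 2 * xi (ln s) i) has_real_derivative
      (real i - (real k + 1) / 2) * ((p - 1) / 2) * (1 / s) + (p - 1) / 2 * (rhs1 k (xi (ln s)) i * (1 / s))) (at s within S)"
    unfolding zeta_bar_def
    using d1 s0 by (auto intro!: derivative_eq_intros simp: o_def)
  have e: "rhs2 p c1 k (\<lambda>l. zeta_bar p c1 k l s + m0 + (p - 1) / 2 * xi (ln s) l) i
      = (real i - (real k + 1) / 2) * ((p - 1) / 2) * (1 / s) + (p - 1) / 2 * (rhs1 k (xi (ln s)) i * (1 / s))"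
  proof -
    have e0: "rhs2 p c1 k (\<lambda>l. zeta_bar p c1 k l s + m0 + (p - 1) / 2 * xi (ln s) l) i
      = (p - 1) / 2 / s * (rhs1 k (xi (ln s)) i + (real i - (real k + 1) / 2))"
      by (rule rhs2_id[OF p c1 s0 i]) simp
    have "(p - 1) / 2 / s * (rhs1 k (xi (ln s)) i + (real i - (real k + 1) / 2))
      = (real i - (real k + 1) / 2) * ((p - 1) / 2) * (1 / s) + (p - 1) / 2 * (rhs1 k (xi (ln s)) i * (1 / s))"
      using s0 by (simp add: field_simps)
    then show ?thesis using e0 by simp
  qed
  show "((\<lambda>s. zeta_bar p c1 k i s + m0 + (p - 1) / 2 * xi (ln s) i) has_real_derivative
      rhs2 p c1 k (\<lambda>l. zeta_bar p c1 k l s + m0 + (p - 1) / 2 * xi (ln s) l) i) (at s within S)"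
    unfolding e by (rule d2)
qed




lemma backward:
  assumes p: "p > 1" and c1: "c1 > 0"
    and sol: "solves2 p c1 k zeta (exp ` S)"
  shows "solves1 k (\<lambda>\<tau> i. (zeta (exp \<tau>) i - zeta_bar p c1 k i (exp \<tau>) - m0) / ((p - 1) / 2)) S"
  unfolding solves1_def
proof (intro ballI)
  fix \<tau> i assume t: "\<tau> \<in> S" and i: "i \<in> {1..k}"
  define c where "c = (p - 1) / 2"
  have c: "c > 0" unfolding c_def using p by simp
  define s where "s = exp \<tau>"
  have s: "s > 0" unfolding s_def by simp
  define x where "x = (\<lambda>j. (zeta s j - zeta_bar p c1 k j s - m0) / c)"
  have z: "zeta s l = zeta_bar p c1 k l s + m0 + (p - 1) / 2 * x l" for l
    unfolding x_def c_def[symmetric] using c by (simp add: field_simps)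
  have r: "rhs2 p c1 k (zeta s) i = c / s * (rhs1 k x i + (real i - (real k + 1) / 2))"
    using rhs2_id[OF p c1 s i z] unfolding c_def .
  have d1: "((\<lambda>s. zeta s i) \<circ> exp has_real_derivative rhs2 p c1 k (zeta (exp \<tau>)) i * exp \<tau>) (at \<tau> within S)"
  proof (rule DERIV_image_chain)
    show "((\<lambda>s. zeta s i) has_real_derivative rhs2 p c1 k (zeta (exp \<tau>)) i) (at (exp \<tau>) within exp ` S)"
      using sol t i unfolding solves2_def by auto
    show "(exp has_real_derivative exp \<tau>) (at \<tau> within S)"
      by (auto intro!: derivative_eq_intros)
  qed
  have zb: "zeta_bar p c1 k i (exp u) = (real i - (real k + 1) / 2) * c * u + alpha_bar p c1 k i" for u
    unfolding zeta_bar_def c_def by auto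
  have d2: "((\<lambda>\<tau>. (zeta (exp \<tau>) i - zeta_bar p c1 k i (exp \<tau>) - m0) / c) has_real_derivative
      (rhs2 p c1 k (zeta (exp \<tau>)) i * exp \<tau> - (real i - (real k + 1) / 2) * c) / c) (at \<tau> within S)"
    unfolding zb using d1 c by (auto intro!: derivative_eq_intros simp: o_def)
  have "(rhs2 p c1 k (zeta (exp \<tau>)) i * exp \<tau> - (real i - (real k + 1) / 2) * c) / c = rhs1 k x i"
    unfolding s_def[symmetric] r using c s by (simp add: field_simps)
  moreover have "x = (\<lambda>i. (zeta (exp \<tau>) i - zeta_bar p c1 k i (exp \<tau>) - m0) / ((p - 1) / 2))"
    unfolding x_def s_def c_def ..
  ultimately show "((\<lambda>\<tau>. (zeta (exp \<tau>) i - zeta_bar p c1 k i (exp \<tau>) - m0) / ((p - 1) / 2)) has_real_derivative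
      rhs1 k (\<lambda>i. (zeta (exp \<tau>) i - zeta_bar p c1 k i (exp \<tau>) - m0) / ((p - 1) / 2)) i) (at \<tau> within S)"
    using d2 unfolding c_def by simp
qed

lemma ln_img1: "ln ` {1..} = {0::real..}"
proof
  show "ln ` {1..} \<subseteq> {0::real..}" by auto
  show "{0::real..} \<subseteq> ln ` {1..}"
  proof
    fix t :: real assume "t \<in> {0..}"
    then have "exp t \<in> {1..}" by auto
    then show "t \<in> ln ` {1..}" by (rule image_eqI[rotated]) simp
  qed
qed

lemma exp_img: "(T::real) > 1 \<Longrightarrow> exp ` {0..<ln T} = {1..<T}"
proof
  assume T: "T > 1"
  show "exp ` {0..<ln T} \<subseteq> {1..<T}"
  proof
    fix s assume "s \<in> exp ` {0..<ln T}"
    then obtain t where t: "t \<in> {0..<ln T}" "s = exp t" by auto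
    have "exp t < exp (ln T)" using t by (subst exp_less_cancel_iff) auto
    then show "s \<in> {1..<T}" using t T by auto
  qed
  show "{1..<T} \<subseteq> exp ` {0..<ln T}"
  proof
    fix s assume s: "s \<in> {1..<T}"
    then have "ln s \<in> {0..<ln T}" using T by auto
    moreover have "s = exp (ln s)" using s by simp
    ultimately show "s \<in> exp ` {0..<ln T}" by blast
  qed
qed

lemma part2:
  assumes p: "p > 1" and c1: "c1 > 0" and k: "k \<ge> 2"
  shows "\<forall>z1 :: nat \<Rightarrow> real.
        (\<exists>zeta. solves2 p c1 k zeta {1..} \<and> zeta 1 = z1) \<and>
        (\<exists>C>0. \<forall>T>1. \<forall>zeta. solves2 p c1 k zeta {1..<T} \<and> zeta 1 = z1 \<longrightarrow>
            (\<forall>s\<in>{1..<T}. \<forall>i\<in>{1..k}.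
               \<bar>zeta s i - (zeta_bar p c1 k i s + (\<Sum>j=1..k. z1 j) / real k)\<bar> \<le> C / s))"
proof
  fix z1 :: "nat \<Rightarrow> real"
  define c where "c = (p - 1) / 2"
  have c: "c > 0" unfolding c_def using p by simp
  define m0 where "m0 = (\<Sum>j=1..k. z1 j) / real k"
  define x0 where "x0 i = (z1 i - zeta_bar p c1 k i 1 - m0) / c" for i
  have zb1: "zeta_bar p c1 k i 1 = alpha_bar p c1 k i" for i unfolding zeta_bar_def by simp
  have k1: "k \<ge> 1" using k by simp
  have sx0: "(\<Sum>i=1..k. x0 i) = 0"
  proof -
    have "(\<Sum>i=1..k. x0 i) = ((\<Sum>i=1..k. z1 i) - (\<Sum>i=1..k. alpha_bar p c1 k i) - real k * m0) / c"
      unfolding x0_def zb1 by (simp add: sum_divide_distrib[symmetric] sum_subtractf)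
    also have "\<dots> = 0" unfolding alpha_bar_props(1)[OF p c1 k1] m0_def using k by simp
    finally show ?thesis .
  qed
  define C0 where "C0 = (\<Sum>i=1..k. \<bar>x0 i\<bar>) + 1"
  have C0: "C0 > 0" unfolding C0_def by (simp add: add_nonneg_pos sum_nonneg)
  have bx0: "\<bar>x0 i\<bar> \<le> C0" if "i \<in> {1..k}" for i
  proof -
    have "\<bar>x0 i\<bar> \<le> (\<Sum>i=1..k. \<bar>x0 i\<bar>)" using that by (intro member_le_sum) auto
    then show ?thesis unfolding C0_def by simp
  qed
  obtain C1 where C1: "C1 > 0" and P0: "\<forall>x0 :: nat \<Rightarrow> real.
        (\<Sum>i=1..k. x0 i) = 0 \<and> (\<forall>i\<in>{1..k}. \<bar>x0 i\<bar> \<le> C0) \<longrightarrow>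
          (\<exists>xi. solves1 k xi {0..} \<and> xi 0 = x0) \<and>
          (\<forall>T>0. \<forall>xi. solves1 k xi {0..<T} \<and> xi 0 = x0 \<longrightarrow>
              (\<forall>\<tau>\<in>{0..<T}. \<forall>i\<in>{1..k}. \<bar>xi \<tau> i\<bar> \<le> C1 * exp (- \<tau>)))"
    using mp[OF spec[OF part1[OF k], of C0] C0] by (elim exE conjE)
  have H: "(\<Sum>i=1..k. x0 i) = 0 \<and> (\<forall>i\<in>{1..k}. \<bar>x0 i\<bar> \<le> C0)" using sx0 bx0 by auto
  have P: "(\<exists>xi. solves1 k xi {0..} \<and> xi 0 = x0) \<and>
          (\<forall>T>0. \<forall>xi. solves1 k xi {0..<T} \<and> xi 0 = x0 \<longrightarrow>
              (\<forall>\<tau>\<in>{0..<T}. \<forall>i\<in>{1..k}. \<bar>xi \<tau> i\<bar> \<le> C1 * exp (- \<tau>)))"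
    using mp[OF spec[OF P0, of x0] H] .
  show "(\<exists>zeta. solves2 p c1 k zeta {1..} \<and> zeta 1 = z1) \<and>
        (\<exists>C>0. \<forall>T>1. \<forall>zeta. solves2 p c1 k zeta {1..<T} \<and> zeta 1 = z1 \<longrightarrow>
            (\<forall>s\<in>{1..<T}. \<forall>i\<in>{1..k}.
               \<bar>zeta s i - (zeta_bar p c1 k i s + (\<Sum>j=1..k. z1 j) / real k)\<bar> \<le> C / s))"
  proof
    obtain xi where xi: "solves1 k xi {0..}" "xi 0 = x0" using P by blast
    define zeta where "zeta s i = zeta_bar p c1 k i s + m0 + (p - 1) / 2 * xi (ln s) i" for s i
    have "solves2 p c1 k zeta {1..}"
      unfolding zeta_def by (rule forward[OF p c1]) (use xi(1) ln_img1 in auto)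
    moreover have "zeta 1 = z1"
      unfolding zeta_def using xi(2) c unfolding x0_def c_def by (auto simp: field_simps)
    ultimately show "\<exists>zeta. solves2 p c1 k zeta {1..} \<and> zeta 1 = z1" by blast
  next
    show "\<exists>C>0. \<forall>T>1. \<forall>zeta. solves2 p c1 k zeta {1..<T} \<and> zeta 1 = z1 \<longrightarrow>
            (\<forall>s\<in>{1..<T}. \<forall>i\<in>{1..k}.
               \<bar>zeta s i - (zeta_bar p c1 k i s + (\<Sum>j=1..k. z1 j) / real k)\<bar> \<le> C / s)"
    proof (intro exI[of _ "c * C1"] conjI allI impI ballI)
      show "c * C1 > 0" using c C1 by simp
      fix T :: real and zeta s i
      assume T: "T > 1" and Z: "solves2 p c1 k zeta {1..<T} \<and> zeta 1 = z1"
        and s: "s \<in> {1..<T}" and i: "i \<in> {1..k}"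
      define xi where "xi \<tau> i = (zeta (exp \<tau>) i - zeta_bar p c1 k i (exp \<tau>) - m0) / ((p - 1) / 2)" for \<tau> i
      have sol: "solves1 k xi {0..<ln T}"
        unfolding xi_def by (rule backward[OF p c1]) (use Z exp_img[OF T] in auto)
      have xi0: "xi 0 = x0" unfolding xi_def x0_def c_def using Z by auto
      have lnT: "ln T > 0" using T by simp
      have ls: "ln s \<in> {0..<ln T}" using s T by auto
      have b: "\<bar>xi (ln s) i\<bar> \<le> C1 * exp (- ln s)"
        using conjunct2[OF P, rule_format, OF lnT conjI[OF sol xi0] ls i] .
      have s0: "s > 0" using s by auto
      have "zeta s i - (zeta_bar p c1 k i s + m0) = c * xi (ln s) i"
        unfolding xi_def c_def using s0 p by (simp add: field_simps)
      then have "\<bar>zeta s i - (zeta_bar p c1 k i s + m0)\<bar> = c * \<bar>xi (ln s) i\<bar>"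
        using c by (simp add: abs_mult)
      also have "\<dots> \<le> c * (C1 * exp (- ln s))" using b c by simp
      also have "\<dots> = c * C1 / s" using s0 by (simp add: exp_minus divide_inverse)
      finally show "\<bar>zeta s i - (zeta_bar p c1 k i s + (\<Sum>j=1..k. z1 j) / real k)\<bar> \<le> c * C1 / s"
        unfolding m0_def .
    qed
  qed
qed

theorem proposition2p4:
  fixes p c1 :: real and k :: nat
  assumes "p > 1" and "c1 > 0" and "k \<ge> 2"
  shows
   "(\<forall>C0>0. \<exists>C1>0. \<forall>x0 :: nat \<Rightarrow> real.
        (\<Sum>i=1..k. x0 i) = 0 \<and> (\<forall>i\<in>{1..k}. \<bar>x0 i\<bar> \<le> C0) \<longrightarrow>
          (\<exists>xi. solves1 k xi {0..} \<and> xi 0 = x0) \<and>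
          (\<forall>T>0. \<forall>xi. solves1 k xi {0..<T} \<and> xi 0 = x0 \<longrightarrow>
              (\<forall>\<tau>\<in>{0..<T}. \<forall>i\<in>{1..k}. \<bar>xi \<tau> i\<bar> \<le> C1 * exp (- \<tau>))))
    \<and>
    (\<forall>z1 :: nat \<Rightarrow> real.
        (\<exists>zeta. solves2 p c1 k zeta {1..} \<and> zeta 1 = z1) \<and>
        (\<exists>C>0. \<forall>T>1. \<forall>zeta. solves2 p c1 k zeta {1..<T} \<and> zeta 1 = z1 \<longrightarrow>
            (\<forall>s\<in>{1..<T}. \<forall>i\<in>{1..k}.
               \<bar>zeta s i - (zeta_bar p c1 k i s + (\<Sum>j=1..k. z1 j) / real k)\<bar> \<le> C / s)))"
  using part1[OF assms(3)] part2[OF assms] by blast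


end
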